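(* Let $d\ge1$, $p\ge2$, and let $f\colon X_1\times\dots\times X_d\to\mathbb R$ be centered with $\|f\|D_p<\infty$. Then $$\sup_{L}|S_L[f]|_p\le K_R^d(p)\,\|f\|D_p,$$ the supremum over finite non-empty $L\subset\mathbb Z_+^d$. In particular, if $f(\vec x)=\sum_{\vec k:N(\vec k)\le M}\lambda(\vec k)\prod_{s}g^{(s)}_{k(s)}(x(s))$ is a degenerate representation, then $\sup_L|S_L[f]|_p\le K_R^d(p)\sum_{\vec k}|\lambda(\vec k)|\prod_{s=1}^d|g^{(s)}_{k(s)}|_p$.
   Context: Let $(X_s,\mathcal B_s,\mu_s)$, $s=1,\dots,d$, be probability spaces and $\{\xi_i(s):i\ge1,1\le s\le d\}$ mutually independent random variables, $\xi_i(s)$ with law $\mu_s$. $|\zeta|_p=(\mathbf E|\zeta|^p)^{1/p}$; for $g$ on $X_s$, $|g|_p=|g(\xi_1(s))|_p$; $F$ on $X_1\times\dots\times X_d$ is centered if $\mathbf EF(\xi_1(1),\dots,\xi_1(d))=0$. $N(\vec k)=\max_s k(s)$. For finite non-empty $L\subset\mathbb Z_+^d$, $S_L[f]:=|L|^{-1/2}\sum_{\vec k\in L}f(\xi_{k(1)}(1),\dots,\xi_{k(d)}(d))$. $K_R(p)$ is the smallest constant $K$ such that for all $n$, real $c_i$ and i.i.d. centered $\zeta_i$ with finite $p$-th moment, $|\sum c_i\zeta_i|_p\le K(\sum c_i^2)^{1/2}|\zeta_1|_p$. A degenerate representation of $F$ of degree $M\le\infty$ is $F(\vec x)=\sum_{N(\vec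 k)\le M}\lambda(\vec k)\prod_s g^{(s)}_{k(s)}(x(s))$ with centered $g^{(s)}_j\in L_p(\mu_s)$ (series converging in $L_p$ if $M=\infty$); $\|F\|D_p:=\inf\sum_{\vec k}|\lambda(\vec k)|\prod_s|g^{(s)}_{k(s)}|_p$ over all such representations. *)

theory Defs
  imports "HOL-Probability.Probability"
begin

definition lpn :: "'a measure \<Rightarrow> real \<Rightarrow> ('a \<Rightarrow> real) \<Rightarrow> ennreal" where
  "lpn N p h = (let I = (\<integral>\<^sup>+ x. ennreal (\<bar>h x\<bar> powr p) \<partial>N)
                in if I = \<infinity> then \<infinity> else ennreal ((enn2real I) powr (1 / p)))"

definition Zpd :: "nat \<Rightarrow> (nat \<Rightarrow> nat) set" where
  "Zpd d = {1..d} \<rightarrow>\<^sub>E {1..}"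

definition Nmax :: "nat \<Rightarrow> (nat \<Rightarrow> nat) \<Rightarrow> nat" where
  "Nmax d k = Max (k ` {1..d})"

text \<open>The p-norm of sum c_i zeta_i depends only on the joint law, the product measure nu^n.\<close>
definition K_R :: "real \<Rightarrow> ennreal" where
  "K_R p = Inf {K. \<forall>(n::nat) (c::nat \<Rightarrow> real) (\<nu>::real measure).
      (prob_space \<nu> \<and> sets \<nu> = sets borel \<and> integrable \<nu> (\<lambda>x. x) \<and> (\<integral>x. x \<partial>\<nu>) = 0
        \<and> lpn \<nu> p (\<lambda>x. x) < \<infinity>)
      \<longrightarrow> lpn (PiM {..<n} (\<lambda>_. \<nu>)) p (\<lambda>z. \<Sum>i<n. c i * z i)
            \<le> K * ennreal (sqrt (\<Sum>i<n. (c i)\<^sup>2)) * lpn \<nu> p (\<lambda>x. x)}"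

definition centered_Lp :: "'a measure \<Rightarrow> real \<Rightarrow> ('a \<Rightarrow> real) \<Rightarrow> bool" where
  "centered_Lp N p g \<longleftrightarrow> g \<in> borel_measurable N \<and> integrable N g \<and> (\<integral>x. g x \<partial>N) = 0
     \<and> lpn N p g < \<infinity>"

definition rep_partial :: "nat \<Rightarrow> ((nat \<Rightarrow> nat) \<Rightarrow> real) \<Rightarrow> (nat \<Rightarrow> nat \<Rightarrow> 'a \<Rightarrow> real)
    \<Rightarrow> nat \<Rightarrow> (nat \<Rightarrow> 'a) \<Rightarrow> real" where
  "rep_partial d lam g m x =
     (\<Sum>k\<in>{k\<in>Zpd d. Nmax d k \<le> m}. lam k * (\<Prod>s\<in>{1..d}. g s (k s) (x s)))"

text \<open>Degenerate representation of degree M \<le> \<infinity> (M = None means \<infinity>):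
  F = sum over N(k) \<le> M of lam(k) prod_s g_(k(s))^(s)(x(s)), with centered g in L_p;
  equality is in L_p (for M = \<infinity>: L_p convergence of the partial sums over N(k) \<le> m).\<close>
definition degrep :: "nat \<Rightarrow> (nat \<Rightarrow> 'a measure) \<Rightarrow> real \<Rightarrow> enat \<Rightarrow> ((nat \<Rightarrow> 'a) \<Rightarrow> real)
    \<Rightarrow> ((nat \<Rightarrow> nat) \<Rightarrow> real) \<Rightarrow> (nat \<Rightarrow> nat \<Rightarrow> 'a \<Rightarrow> real) \<Rightarrow> bool" where
  "degrep d M p Mdeg F lam g \<longleftrightarrow>
     (\<forall>s\<in>{1..d}. \<forall>j\<ge>1. centered_Lp (M s) p (g s j))
     \<and> (\<forall>k\<in>Zpd d. enat (Nmax d k) > Mdeg \<longrightarrow> lam k = 0)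
     \<and> ((\<lambda>m. lpn (PiM {1..d} M) p (\<lambda>x. F x - rep_partial d lam g m x)) \<longlonglongrightarrow> 0)"

definition rep_cost :: "nat \<Rightarrow> (nat \<Rightarrow> 'a measure) \<Rightarrow> real
    \<Rightarrow> ((nat \<Rightarrow> nat) \<Rightarrow> real) \<Rightarrow> (nat \<Rightarrow> nat \<Rightarrow> 'a \<Rightarrow> real) \<Rightarrow> ennreal" where
  "rep_cost d M p lam g =
     (\<integral>\<^sup>+ k. ennreal \<bar>lam k\<bar> * (\<Prod>s\<in>{1..d}. lpn (M s) p (g s (k s))) \<partial>count_space (Zpd d))"

definition Dnorm :: "nat \<Rightarrow> (nat \<Rightarrow> 'a measure) \<Rightarrow> real \<Rightarrow> ((nat \<Rightarrow> 'a) \<Rightarrow> real) \<Rightarrow> ennreal" where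
  "Dnorm d M p F = Inf {rep_cost d M p lam g | lam g Mdeg. degrep d M p Mdeg F lam g}"

text \<open>S_L[f] = |L|^(-1/2) sum_{k in L} f(xi_{k(1)}(1),...,xi_{k(d)}(d)); xi i s = xi_i(s).\<close>
definition S_L :: "nat \<Rightarrow> (nat \<Rightarrow> nat \<Rightarrow> 'w \<Rightarrow> 'a) \<Rightarrow> ((nat \<Rightarrow> 'a) \<Rightarrow> real)
    \<Rightarrow> (nat \<Rightarrow> nat) set \<Rightarrow> 'w \<Rightarrow> real" where
  "S_L d \<xi> f L \<omega> = (\<Sum>k\<in>L. f (\<lambda>s\<in>{1..d}. \<xi> (k s) s \<omega>)) / sqrt (real (card L))"

end

theory Submission
  imports Defs
begin

definition lpI :: "'a measure \<Rightarrow> real \<Rightarrow> ('a \<Rightarrow> real) \<Rightarrow> ennreal" where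
  "lpI N p h = (\<integral>\<^sup>+ x. ennreal (\<bar>h x\<bar> powr p) \<partial>N)"

lemma lpn_lpI: "lpn N p h = (if lpI N p h = \<infinity> then \<infinity> else ennreal ((enn2real (lpI N p h)) powr (1 / p)))"
  unfolding lpn_def lpI_def Let_def by simp

lemma lpn_le_iff:
  assumes p: "p > 0" and c: "c \<ge> 0"
  shows "lpn N p h \<le> ennreal c \<longleftrightarrow> lpI N p h \<le> ennreal (c powr p)"
proof (cases "lpI N p h = \<infinity>")
  case True thus ?thesis by (simp add: lpn_lpI top_unique)
next
  case False
  then obtain r where r: "lpI N p h = ennreal r" "r \<ge> 0"
    by (cases "lpI N p h") auto
  have "lpn N p h = ennreal (r powr (1/p))" using r by (simp add: lpn_lpI)
  moreover have "r powr (1/p) \<le> c \<longleftrightarrow> r \<le> c powr p"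
  proof
    assume "r powr (1/p) \<le> c"
    hence "(r powr (1/p)) powr p \<le> c powr p" using r p by (intro powr_mono2) auto
    thus "r \<le> c powr p" using r p by (simp add: powr_powr)
  next
    assume "r \<le> c powr p"
    hence "r powr (1/p) \<le> (c powr p) powr (1/p)" using r p by (intro powr_mono2) auto
    thus "r powr (1/p) \<le> c" using c p by (simp add: powr_powr)
  qed
  ultimately show ?thesis using r c by (simp add: ennreal_le_iff)
qed

lemma lpn_finite_eq:
  assumes "lpI N p h \<noteq> \<infinity>"
  shows "lpn N p h = ennreal ((enn2real (lpI N p h)) powr (1 / p))"
  using assms by (simp add: lpn_lpI)

lemma lpn_eq_ennreal:
  assumes p: "p > 0" and "lpn N p h \<noteq> \<infinity>"
  shows "lpI N p h = ennreal ((enn2real (lpn N p h)) powr p)"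
proof -
  have f: "lpI N p h \<noteq> \<infinity>" using assms(2) by (auto simp: lpn_lpI split: if_splits)
  then obtain r where r: "lpI N p h = ennreal r" "r \<ge> 0"
    by (cases "lpI N p h") auto
  have "lpn N p h = ennreal (r powr (1/p))" using r by (simp add: lpn_lpI)
  thus ?thesis using r p by (simp add: powr_powr)
qed

lemma lpn_cong_AE:
  assumes "AE x in N. h x = h' x"
  shows "lpn N p h = lpn N p h'"
proof -
  have "lpI N p h = lpI N p h'" unfolding lpI_def
    by (rule nn_integral_cong_AE) (use assms in auto)
  thus ?thesis by (simp add: lpn_lpI)
qed

lemma lpn_cong:
  assumes "\<And>x. x \<in> space N \<Longrightarrow> h x = h' x"
  shows "lpn N p h = lpn N p h'"
  by (rule lpn_cong_AE) (use assms in auto)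

lemma lpn_distr:
  assumes T: "T \<in> measurable N N'" and h: "h \<in> borel_measurable N'"
  shows "lpn (distr N N' T) p h = lpn N p (\<lambda>x. h (T x))"
proof -
  have "lpI (distr N N' T) p h = lpI N p (\<lambda>x. h (T x))" unfolding lpI_def
    by (rule nn_integral_distr[OF T]) (use h in measurable)
  thus ?thesis by (simp add: lpn_lpI)
qed

lemma lpn_nonneg_zero: "p > 0 \<Longrightarrow> lpn N p (\<lambda>x. 0) = 0"
  by (simp add: lpn_lpI lpI_def)

lemma lpn_scale:
  assumes p: "p > 0" and hm: "h \<in> borel_measurable N"
  shows "lpn N p (\<lambda>x. c * h x) = ennreal \<bar>c\<bar> * lpn N p h"
proof (cases "c = 0")
  case True thus ?thesis using p by (simp add: lpn_nonneg_zero)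
next
  case False
  have eq: "lpI N p (\<lambda>x. c * h x) = ennreal (\<bar>c\<bar> powr p) * lpI N p h"
    unfolding lpI_def
    by (subst nn_integral_cmult[symmetric])
       (use hm in \<open>auto simp: abs_mult powr_mult ennreal_mult intro!: nn_integral_cong\<close>)
  show ?thesis
  proof (cases "lpI N p h = \<infinity>")
    case True thus ?thesis using False eq by (simp add: lpn_lpI ennreal_mult_eq_top_iff)
  next
    case fin: False
    then obtain r where r: "lpI N p h = ennreal r" "r \<ge> 0"
      by (cases "lpI N p h") auto
    have "lpI N p (\<lambda>x. c * h x) = ennreal (\<bar>c\<bar> powr p * r)" using eq r by (simp add: ennreal_mult)
    hence "lpn N p (\<lambda>x. c * h x) = ennreal ((\<bar>c\<bar> powr p * r) powr (1/p))"
      using r by (simp add: lpn_lpI)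
    also have "\<dots> = ennreal (\<bar>c\<bar> * r powr (1/p))"
      using p r by (simp add: powr_mult powr_powr)
    also have "\<dots> = ennreal \<bar>c\<bar> * lpn N p h" using r by (simp add: lpn_lpI ennreal_mult)
    finally show ?thesis .
  qed
qed

lemma convex_powr0:
  fixes x y t p :: real
  assumes "x \<ge> 0" "y \<ge> 0" "0 \<le> t" "t \<le> 1" "p \<ge> 1"
  shows "((1 - t) * x + t * y) powr p \<le> (1 - t) * x powr p + t * y powr p"
proof -
  have tp: "s powr p \<le> s" if "0 \<le> s" "s \<le> 1" for s :: real
  proof (cases "s = 0")
    case True thus ?thesis by simp
  next
    case False
    hence "s powr p \<le> s powr 1" using that assms(5) by (intro powr_mono') auto
    thus ?thesis using that False by simp
  qed
  show ?thesis
  proof (cases "x = 0 \<or> y = 0")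
    case True
    thus ?thesis
    proof
      assume x: "x = 0"
      have "(t * y) powr p = t powr p * y powr p" using assms by (simp add: powr_mult)
      also have "\<dots> \<le> t * y powr p" using tp[of t] assms by (intro mult_right_mono) auto
      finally show ?thesis using x by simp
    next
      assume y: "y = 0"
      have "((1-t) * x) powr p = (1-t) powr p * x powr p" using assms by (simp add: powr_mult)
      also have "\<dots> \<le> (1-t) * x powr p" using tp[of "1-t"] assms by (intro mult_right_mono) auto
      finally show ?thesis using y by simp
    qed
  next
    case False
    hence "x > 0" "y > 0" using assms by auto
    from convex_onD[OF powr_convex[OF assms(5)], of t x y] this assms
    show ?thesis by simp
  qed
qed

lemma mink_pt:
  fixes a b X Y p :: real
  assumes "a > 0" "b > 0" "X \<ge> 0" "Y \<ge> 0" "p \<ge> 1"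
  shows "(X + Y) powr p \<le> (a+b) powr p * (a/(a+b)) / a powr p * X powr p
                           + (a+b) powr p * (b/(a+b)) / b powr p * Y powr p"
proof -
  define t where "t = b / (a+b)"
  have t: "0 \<le> t" "t \<le> 1" "1 - t = a/(a+b)" using assms by (auto simp: t_def field_simps)
  have "(a+b) * ((1-t) * (X/a) + t * (Y/b)) = (a+b) * (X/(a+b) + Y/(a+b))"
    using assms by (simp add: t(3), simp add: t_def)
  also have "\<dots> = X + Y" using assms by (simp add: distrib_left)
  finally have "X + Y = (a+b) * ((1-t) * (X/a) + t * (Y/b))" by simp
  hence "(X+Y) powr p = (a+b) powr p * ((1-t) * (X/a) + t * (Y/b)) powr p"
    using assms t by (simp add: powr_mult)
  also have "\<dots> \<le> (a+b) powr p * ((1-t) * (X/a) powr p + t * (Y/b) powr p)"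
    using assms t by (intro mult_left_mono convex_powr0) auto
  also have "\<dots> = (a+b) powr p * (a/(a+b)) / a powr p * X powr p
                           + (a+b) powr p * (b/(a+b)) / b powr p * Y powr p"
    using assms by (simp add: t t_def powr_divide field_simps)
  finally show ?thesis .
qed

lemma lpI_zero_AE:
  assumes p: "p > 0" and hm: "h \<in> borel_measurable N" and z: "lpI N p h = 0"
  shows "AE x in N. h x = 0"
proof -
  have "AE x in N. ennreal (\<bar>h x\<bar> powr p) = 0"
    using z hm unfolding lpI_def by (subst nn_integral_0_iff_AE[symmetric]) auto
  thus ?thesis by eventually_elim (auto simp: ennreal_eq_0_iff)
qed

lemma lpn_zero_AE:
  assumes p: "p > 0" and hm: "h \<in> borel_measurable N" and z: "lpn N p h = 0"
  shows "AE x in N. h x = 0"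
proof -
  have "lpI N p h \<le> ennreal (0 powr p)" using z lpn_le_iff[OF p, of 0 N h] by simp
  hence "lpI N p h = 0" by simp
  thus ?thesis using lpI_zero_AE[OF p hm] by blast
qed

lemma minkowski:
  assumes p: "p \<ge> 1" and h1: "h1 \<in> borel_measurable N" and h2: "h2 \<in> borel_measurable N"
  shows "lpn N p (\<lambda>x. h1 x + h2 x) \<le> lpn N p h1 + lpn N p h2"
proof (cases "lpn N p h1 = \<infinity> \<or> lpn N p h2 = \<infinity>")
  case True thus ?thesis by auto
next
  case False
  have p0: "p > 0" using p by simp
  define a where "a = enn2real (lpn N p h1)"
  define b where "b = enn2real (lpn N p h2)"
  have A: "lpn N p h1 = ennreal a" and B: "lpn N p h2 = ennreal b" "a \<ge> 0" "b \<ge> 0"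
    using False by (auto simp: a_def b_def less_top[symmetric])
  have IA: "lpI N p h1 = ennreal (a powr p)" using lpn_eq_ennreal[OF p0, of N h1] False A B by simp
  have IB: "lpI N p h2 = ennreal (b powr p)" using lpn_eq_ennreal[OF p0, of N h2] False A B by simp
  show ?thesis
  proof (cases "a = 0")
    case True
    hence "AE x in N. h1 x = 0" using lpn_zero_AE[OF p0 h1] A by simp
    hence "lpn N p (\<lambda>x. h1 x + h2 x) = lpn N p h2" by (intro lpn_cong_AE) auto
    thus ?thesis by simp
  next
    case a0: False
    show ?thesis
    proof (cases "b = 0")
      case True
      hence "AE x in N. h2 x = 0" using lpn_zero_AE[OF p0 h2] B by simp
      hence "lpn N p (\<lambda>x. h1 x + h2 x) = lpn N p h1" by (intro lpn_cong_AE) auto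
      thus ?thesis by simp
    next
      case b0: False
      have ab: "a > 0" "b > 0" using a0 b0 B by auto
      define C1 where "C1 = (a+b) powr p * (a/(a+b)) / a powr p"
      define C2 where "C2 = (a+b) powr p * (b/(a+b)) / b powr p"
      have C: "C1 \<ge> 0" "C2 \<ge> 0" using ab by (auto simp: C1_def C2_def)
      have "lpI N p (\<lambda>x. h1 x + h2 x) \<le>
              (\<integral>\<^sup>+ x. ennreal C1 * ennreal (\<bar>h1 x\<bar> powr p) + ennreal C2 * ennreal (\<bar>h2 x\<bar> powr p) \<partial>N)"
        unfolding lpI_def
      proof (intro nn_integral_mono)
        fix x
        have "\<bar>h1 x + h2 x\<bar> powr p \<le> (\<bar>h1 x\<bar> + \<bar>h2 x\<bar>) powr p"
          using p by (intro powr_mono2) auto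
        also have "\<dots> \<le> C1 * \<bar>h1 x\<bar> powr p + C2 * \<bar>h2 x\<bar> powr p"
          unfolding C1_def C2_def by (rule mink_pt) (use ab p in auto)
        finally show "ennreal (\<bar>h1 x + h2 x\<bar> powr p) \<le> ennreal C1 * ennreal (\<bar>h1 x\<bar> powr p) + ennreal C2 * ennreal (\<bar>h2 x\<bar> powr p)"
          using C by (simp add: ennreal_mult[symmetric] ennreal_plus[symmetric] del: ennreal_plus)
      qed
      also have "\<dots> = ennreal C1 * lpI N p h1 + ennreal C2 * lpI N p h2"
        unfolding lpI_def using h1 h2
        by (subst nn_integral_add) (auto simp: nn_integral_cmult)
      also have "\<dots> = ennreal (C1 * a powr p + C2 * b powr p)"
        using C ab by (simp add: IA IB ennreal_mult[symmetric] ennreal_plus[symmetric] del: ennreal_plus)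
      also have "C1 * a powr p + C2 * b powr p = (a+b) powr p * (a/(a+b) + b/(a+b))"
        using ab by (simp add: C1_def C2_def distrib_left)
      also have "a/(a+b) + b/(a+b) = 1" using ab by (simp add: add_divide_distrib[symmetric])
      finally have *: "lpI N p (\<lambda>x. h1 x + h2 x) \<le> ennreal ((a+b) powr p)" by simp
      have "lpn N p (\<lambda>x. h1 x + h2 x) \<le> ennreal (a+b)"
        by (subst lpn_le_iff[OF p0]) (use ab * in auto)
      thus ?thesis using A B by (simp add: ennreal_plus[symmetric] del: ennreal_plus)
    qed
  qed
qed

lemma minkowski_sum:
  assumes p: "p \<ge> 1" and "finite I" and h: "\<And>i. i \<in> I \<Longrightarrow> h i \<in> borel_measurable N"
  shows "lpn N p (\<lambda>x. \<Sum>i\<in>I. h i x) \<le> (\<Sum>i\<in>I. lpn N p (h i))"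
  using assms(2) h
proof (induction I rule: finite_induct)
  case empty thus ?case using p by (simp add: lpn_nonneg_zero)
next
  case (insert i I)
  have "lpn N p (\<lambda>x. \<Sum>j\<in>insert i I. h j x) = lpn N p (\<lambda>x. h i x + (\<Sum>j\<in>I. h j x))"
    using insert by simp
  also have "\<dots> \<le> lpn N p (h i) + lpn N p (\<lambda>x. \<Sum>j\<in>I. h j x)"
    using insert by (intro minkowski p) auto
  also have "\<dots> \<le> lpn N p (h i) + (\<Sum>j\<in>I. lpn N p (h j))"
    using insert by (intro add_left_mono) auto
  finally show ?case using insert by simp
qed

lemma le_Inf_mult:
  fixes X c :: ennreal
  assumes S: "S \<noteq> {}" and c: "c \<noteq> \<top>" and le: "\<And>K. K \<in> S \<Longrightarrow> X \<le> K * c"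
  shows "X \<le> Inf S * c"
proof (cases "c = 0")
  case True
  from S obtain K where "K \<in> S" by auto
  with le True show ?thesis by force
next
  case False
  define Y where "Y = X / c"
  have XY: "X = Y * c" using False c
    by (simp add: Y_def ennreal_divide_times ennreal_times_divide ennreal_mult_divide_eq)
  have "Y \<le> K" if "K \<in> S" for K
  proof -
    have "c * Y \<le> c * K" using le[OF that] XY by (simp add: mult.commute)
    thus ?thesis using ennreal_mult_le_mult_iff[OF False c] by simp
  qed
  hence "Y \<le> Inf S" by (rule Inf_greatest)
  thus ?thesis using XY by (simp add: mult_right_mono)
qed

lemma KR_prop:
  fixes \<nu> :: "real measure" and c :: "nat \<Rightarrow> real"
  assumes fin: "K_R p \<noteq> \<top>"
    and \<nu>: "prob_space \<nu>" "sets \<nu> = sets borel" "integrable \<nu> (\<lambda>x. x)" "(\<integral>x. x \<partial>\<nu>) = 0"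
           "lpn \<nu> p (\<lambda>x. x) < \<infinity>"
  shows "lpn (PiM {..<n} (\<lambda>_. \<nu>)) p (\<lambda>z. \<Sum>i<n. c i * z i)
            \<le> K_R p * (ennreal (sqrt (\<Sum>i<n. (c i)\<^sup>2)) * lpn \<nu> p (\<lambda>x. x))"
proof -
  define S where "S = {K. \<forall>(n::nat) (c::nat \<Rightarrow> real) (\<nu>::real measure).
      (prob_space \<nu> \<and> sets \<nu> = sets borel \<and> integrable \<nu> (\<lambda>x. x) \<and> (\<integral>x. x \<partial>\<nu>) = 0
        \<and> lpn \<nu> p (\<lambda>x. x) < \<infinity>)
      \<longrightarrow> lpn (PiM {..<n} (\<lambda>_. \<nu>)) p (\<lambda>z. \<Sum>i<n. c i * z i)
            \<le> K * ennreal (sqrt (\<Sum>i<n. (c i)\<^sup>2)) * lpn \<nu> p (\<lambda>x. x)}"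
  have KS: "K_R p = Inf S" unfolding K_R_def S_def ..
  have "S \<noteq> {}" using fin KS by auto
  moreover have "ennreal (sqrt (\<Sum>i<n. (c i)\<^sup>2)) * lpn \<nu> p (\<lambda>x. x) \<noteq> \<top>"
    using \<nu>(5) by (simp add: ennreal_mult_eq_top_iff)
  ultimately show ?thesis unfolding KS
  proof (rule le_Inf_mult)
    fix K assume "K \<in> S"
    hence "lpn (PiM {..<n} (\<lambda>_. \<nu>)) p (\<lambda>z. \<Sum>i<n. c i * z i)
            \<le> K * ennreal (sqrt (\<Sum>i<n. (c i)\<^sup>2)) * lpn \<nu> p (\<lambda>x. x)"
      using \<nu> unfolding S_def mem_Collect_eq
      by (elim allE[where x=n] allE[where x=c] allE[where x=\<nu>]) simp
    thus "lpn (PiM {..<n} (\<lambda>_. \<nu>)) p (\<lambda>z. \<Sum>i<n. c i * z i)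
            \<le> K * (ennreal (sqrt (\<Sum>i<n. (c i)\<^sup>2)) * lpn \<nu> p (\<lambda>x. x))"
      by (simp add: mult.assoc)
  qed
qed

lemma KR_apply:
  fixes I :: "'i set" and h :: "'a \<Rightarrow> real" and c :: "'i \<Rightarrow> real"
  assumes fin: "K_R p \<noteq> \<top>" and Mt: "prob_space Mt" and h: "centered_Lp Mt p h" and I: "finite I"
  shows "lpn (PiM I (\<lambda>_. Mt)) p (\<lambda>z. \<Sum>i\<in>I. c i * h (z i))
           \<le> K_R p * (ennreal (sqrt (\<Sum>i\<in>I. (c i)\<^sup>2)) * lpn Mt p h)"
proof -
  have hm[measurable]: "h \<in> borel_measurable Mt" and hi: "integrable Mt h" and h0: "(\<integral>x. h x \<partial>Mt) = 0"
    and hl: "lpn Mt p h < \<infinity>" using h by (auto simp: centered_Lp_def)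
  define \<nu> where "\<nu> = distr Mt borel h"
  have sets\<nu>: "sets \<nu> = sets borel" by (simp add: \<nu>_def)
  have P\<nu>: "prob_space \<nu>" unfolding \<nu>_def by (rule prob_space.prob_space_distr[OF Mt hm])
  have i\<nu>: "integrable \<nu> (\<lambda>x. x)" unfolding \<nu>_def using hi by (subst integrable_distr_eq) auto
  have m\<nu>: "(\<integral>x. x \<partial>\<nu>) = 0" unfolding \<nu>_def using h0 by (subst integral_distr) auto
  have l\<nu>: "lpn \<nu> p (\<lambda>x. x) = lpn Mt p h" unfolding \<nu>_def by (subst lpn_distr) auto
  have hm\<nu>[measurable]: "h \<in> measurable Mt \<nu>" using hm by (simp add: measurable_cong_sets[OF refl sets\<nu>])
  have d1: "distr (PiM I (\<lambda>_. Mt)) (PiM I (\<lambda>_. \<nu>)) (compose I h) = PiM I (\<lambda>_. distr Mt \<nu> h)"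
    by (rule distr_PiM_finite_prob_space'[OF I]) (use Mt P\<nu> in auto)
  have "distr Mt \<nu> h = \<nu>" unfolding \<nu>_def by (rule distr_cong) auto
  with d1 have d1': "distr (PiM I (\<lambda>_. Mt)) (PiM I (\<lambda>_. \<nu>)) (compose I h) = PiM I (\<lambda>_. \<nu>)" by simp
  have cm: "compose I h \<in> measurable (PiM I (\<lambda>_. Mt)) (PiM I (\<lambda>_. \<nu>))"
    unfolding compose_def by measurable
  have step1: "lpn (PiM I (\<lambda>_. Mt)) p (\<lambda>z. \<Sum>i\<in>I. c i * h (z i)) = lpn (PiM I (\<lambda>_. \<nu>)) p (\<lambda>w. \<Sum>i\<in>I. c i * w i)"
  proof -
    have "lpn (PiM I (\<lambda>_. \<nu>)) p (\<lambda>w. \<Sum>i\<in>I. c i * w i)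
        = lpn (distr (PiM I (\<lambda>_. Mt)) (PiM I (\<lambda>_. \<nu>)) (compose I h)) p (\<lambda>w. \<Sum>i\<in>I. c i * w i)"
      using d1' by simp
    also have "\<dots> = lpn (PiM I (\<lambda>_. Mt)) p (\<lambda>z. \<Sum>i\<in>I. c i * compose I h z i)"
      by (rule lpn_distr[OF cm]) (use sets\<nu> in \<open>simp add: measurable_cong_sets[OF sets_PiM_cong[OF refl sets\<nu>] refl]\<close>)
    also have "\<dots> = lpn (PiM I (\<lambda>_. Mt)) p (\<lambda>z. \<Sum>i\<in>I. c i * h (z i))"
      by (intro lpn_cong sum.cong) (auto simp: compose_def)
    finally show ?thesis by simp
  qed
  obtain e where e: "bij_betw e {0..<card I} I" using ex_bij_betw_nat_finite[OF I] by blast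
  define n where "n = card I"
  have e': "bij_betw e {..<n} I" using e by (simp add: n_def lessThan_atLeast0)
  have einj: "inj_on e {..<n}" and eim: "e \<in> {..<n} \<rightarrow> I" using e' by (auto simp: bij_betw_def)
  have d2: "distr (PiM I (\<lambda>_. \<nu>)) (PiM {..<n} (\<lambda>_. \<nu>)) (\<lambda>\<omega>. \<lambda>j\<in>{..<n}. \<omega> (e j)) = PiM {..<n} (\<lambda>_. \<nu>)"
    using distr_PiM_reindex[of I "\<lambda>_. \<nu>" e "{..<n}"] P\<nu> einj eim by simp
  have rm: "(\<lambda>\<omega>. \<lambda>j\<in>{..<n}. \<omega> (e j)) \<in> measurable (PiM I (\<lambda>_. \<nu>)) (PiM {..<n} (\<lambda>_. \<nu>))"
    by measurable (use eim in auto)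
  have step2: "lpn (PiM {..<n} (\<lambda>_. \<nu>)) p (\<lambda>z. \<Sum>j<n. c (e j) * z j) = lpn (PiM I (\<lambda>_. \<nu>)) p (\<lambda>w. \<Sum>i\<in>I. c i * w i)"
  proof -
    have "lpn (PiM {..<n} (\<lambda>_. \<nu>)) p (\<lambda>z. \<Sum>j<n. c (e j) * z j)
        = lpn (distr (PiM I (\<lambda>_. \<nu>)) (PiM {..<n} (\<lambda>_. \<nu>)) (\<lambda>\<omega>. \<lambda>j\<in>{..<n}. \<omega> (e j))) p (\<lambda>z. \<Sum>j<n. c (e j) * z j)"
      using d2 by simp
    also have "\<dots> = lpn (PiM I (\<lambda>_. \<nu>)) p (\<lambda>\<omega>. \<Sum>j<n. c (e j) * (\<lambda>j\<in>{..<n}. \<omega> (e j)) j)"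
      by (rule lpn_distr[OF rm]) (use sets\<nu> in \<open>simp add: measurable_cong_sets[OF sets_PiM_cong[OF refl sets\<nu>] refl]\<close>)
    also have "\<dots> = lpn (PiM I (\<lambda>_. \<nu>)) p (\<lambda>w. \<Sum>i\<in>I. c i * w i)"
      by (intro lpn_cong) (simp add: sum.reindex_bij_betw[OF e', of "\<lambda>i. c i * _ i"])
    finally show ?thesis .
  qed
  have sq: "(\<Sum>j<n. (c (e j))\<^sup>2) = (\<Sum>i\<in>I. (c i)\<^sup>2)"
    by (rule sum.reindex_bij_betw[OF e'])
  have "lpn (PiM {..<n} (\<lambda>_. \<nu>)) p (\<lambda>z. \<Sum>j<n. c (e j) * z j)
        \<le> K_R p * (ennreal (sqrt (\<Sum>j<n. (c (e j))\<^sup>2)) * lpn \<nu> p (\<lambda>x. x))"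
    by (rule KR_prop[OF fin P\<nu> sets\<nu> i\<nu> m\<nu>]) (use l\<nu> hl in simp)
  thus ?thesis using step1 step2 sq l\<nu> by simp
qed

lemma sq_powr_half: "p > 0 \<Longrightarrow> ((x::real)\<^sup>2) powr (p/2) = \<bar>x\<bar> powr p"
proof -
  assume p: "p > 0"
  have "x\<^sup>2 = \<bar>x\<bar> powr 2"
    by (cases "x = 0") (auto simp: powr_realpow)
  hence "(x\<^sup>2) powr (p/2) = (\<bar>x\<bar> powr 2) powr (p/2)" by simp
  also have "\<dots> = \<bar>x\<bar> powr (2 * (p/2))" by (rule powr_powr)
  finally show ?thesis by simp
qed

lemma sqrt_powr: "(S::real) \<ge> 0 \<Longrightarrow> p > 0 \<Longrightarrow> sqrt S powr p = S powr (p/2)"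
proof -
  assume S: "S \<ge> 0" "p > 0"
  have "sqrt S powr p = (S powr (1/2)) powr p" using S by (simp add: powr_half_sqrt)
  also have "\<dots> = S powr (1/2 * p)" by (rule powr_powr)
  finally show ?thesis by simp
qed

lemma sqrt_sum_sq:
  assumes p: "p \<ge> 2" and I: "finite I" and G: "\<And>i. i \<in> I \<Longrightarrow> G i \<in> borel_measurable N"
    and b: "\<And>i. i \<in> I \<Longrightarrow> b i \<ge> 0" and Gb: "\<And>i. i \<in> I \<Longrightarrow> lpn N p (G i) \<le> ennreal (b i)"
  shows "lpn N p (\<lambda>y. sqrt (\<Sum>i\<in>I. (G i y)\<^sup>2)) \<le> ennreal (sqrt (\<Sum>i\<in>I. (b i)\<^sup>2))"
proof -
  define q where "q = p / 2"
  have q: "q \<ge> 1" "q > 0" and p0: "p > 0" using p by (auto simp: q_def)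
  have each: "lpn N q (\<lambda>y. (G i y)\<^sup>2) \<le> ennreal ((b i)\<^sup>2)" if i: "i \<in> I" for i
  proof -
    have "lpI N q (\<lambda>y. (G i y)\<^sup>2) = lpI N p (G i)"
      unfolding lpI_def q_def using p0 by (simp add: sq_powr_half)
    also have "\<dots> \<le> ennreal (b i powr p)" using Gb[OF i] lpn_le_iff[OF p0 b[OF i], of N "G i"] by simp
    also have "b i powr p = ((b i)\<^sup>2) powr q"
      using sq_powr_half[OF p0, of "b i"] b[OF i] by (simp add: q_def)
    finally show ?thesis by (subst lpn_le_iff[OF q(2)]) auto
  qed
  have "lpn N q (\<lambda>y. \<Sum>i\<in>I. (G i y)\<^sup>2) \<le> (\<Sum>i\<in>I. lpn N q (\<lambda>y. (G i y)\<^sup>2))"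
    by (rule minkowski_sum[OF q(1) I]) (use G in measurable)
  also have "\<dots> \<le> (\<Sum>i\<in>I. ennreal ((b i)\<^sup>2))" by (intro sum_mono each)
  also have "\<dots> = ennreal (\<Sum>i\<in>I. (b i)\<^sup>2)" by simp
  finally have A: "lpI N q (\<lambda>y. \<Sum>i\<in>I. (G i y)\<^sup>2) \<le> ennreal ((\<Sum>i\<in>I. (b i)\<^sup>2) powr q)"
    by (subst (asm) lpn_le_iff[OF q(2)]) (auto simp: sum_nonneg)
  have "lpI N p (\<lambda>y. sqrt (\<Sum>i\<in>I. (G i y)\<^sup>2)) = lpI N q (\<lambda>y. \<Sum>i\<in>I. (G i y)\<^sup>2)"
    unfolding lpI_def q_def using p0 by (intro nn_integral_cong) (simp add: sqrt_powr sum_nonneg)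
  also have "(\<Sum>i\<in>I. (b i)\<^sup>2) powr q = (sqrt (\<Sum>i\<in>I. (b i)\<^sup>2)) powr p"
    using p0 by (simp add: sqrt_powr sum_nonneg q_def)
  ultimately show ?thesis using A by (subst lpn_le_iff[OF p0]) (auto simp: sum_nonneg)
qed

definition epow :: "real \<Rightarrow> ennreal \<Rightarrow> ennreal" where
  "epow p x = (if x = \<top> then \<top> else ennreal (enn2real x powr p))"

lemma lpI_epow: "p > 0 \<Longrightarrow> lpI N p h = epow p (lpn N p h)"
proof -
  assume p: "p > 0"
  show ?thesis
  proof (cases "lpI N p h = \<top>")
    case True thus ?thesis by (simp add: lpn_lpI epow_def)
  next
    case False
    then obtain r where r: "lpI N p h = ennreal r" "r \<ge> 0" by (cases "lpI N p h") auto
    thus ?thesis using p by (simp add: lpn_lpI epow_def powr_powr)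
  qed
qed

lemma epow_mono_iff: "p > 0 \<Longrightarrow> epow p x \<le> epow p y \<longleftrightarrow> x \<le> y"
proof -
  assume p: "p > 0"
  show ?thesis
  proof (cases "x = \<top> \<or> y = \<top>")
    case True thus ?thesis by (auto simp: epow_def top_unique)
  next
    case False
    then obtain a b where ab: "x = ennreal a" "y = ennreal b" "a \<ge> 0" "b \<ge> 0"
      by (cases x; cases y) auto
    have "a powr p \<le> b powr p \<longleftrightarrow> a \<le> b" using ab p
      by (meson powr_mono2 powr_less_mono2 less_imp_le not_le)
    thus ?thesis using ab by (simp add: epow_def ennreal_le_iff)
  qed
qed

lemma epow_inj: "p > 0 \<Longrightarrow> epow p x = epow p y \<Longrightarrow> x = y"
  by (metis epow_mono_iff order_antisym order_refl)

lemma epow_mult: "p > 0 \<Longrightarrow> epow p (x * y) = epow p x * epow p y"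
proof -
  assume p: "p > 0"
  consider "x = 0" | "y = 0" | "x \<noteq> 0" "y \<noteq> 0" "x = \<top> \<or> y = \<top>" | "x \<noteq> \<top>" "y \<noteq> \<top>" by blast
  thus ?thesis
  proof cases
    case 1 thus ?thesis by (simp add: epow_def)
  next
    case 2 thus ?thesis by (simp add: epow_def)
  next
    case 3
    have "epow p x \<noteq> 0" "epow p y \<noteq> 0" using 3 p
      by (auto simp: epow_def enn2real_eq_0_iff)
    thus ?thesis using 3 by (auto simp: epow_def ennreal_mult_eq_top_iff)
  next
    case 4
    then obtain a b where ab: "x = ennreal a" "y = ennreal b" "a \<ge> 0" "b \<ge> 0"
      by (cases x; cases y) auto
    thus ?thesis by (simp add: epow_def ennreal_mult[symmetric] powr_mult enn2real_mult)
  qed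
qed

lemma epow_prod: "p > 0 \<Longrightarrow> epow p (\<Prod>i\<in>I. f i) = (\<Prod>i\<in>I. epow p (f i))"
proof (induction I rule: infinite_finite_induct)
  case (infinite A) thus ?case by (simp add: epow_def)
next
  case empty thus ?case by (simp add: epow_def)
next
  case (insert x F) thus ?case by (simp add: epow_mult)
qed

lemma lpn_prod:
  assumes p: "p > 0" and S: "finite S" and M: "\<And>s. prob_space (M s)"
    and h: "\<And>s. s \<in> S \<Longrightarrow> h s \<in> borel_measurable (M s)"
  shows "lpn (PiM S M) p (\<lambda>x. \<Prod>s\<in>S. h s (x s)) = (\<Prod>s\<in>S. lpn (M s) p (h s))"
proof -
  interpret product_prob_space M using M by (simp add: product_prob_space_def product_sigma_finite_def prob_space_imp_sigma_finite product_prob_space_axioms_def)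
  have "lpI (PiM S M) p (\<lambda>x. \<Prod>s\<in>S. h s (x s)) = (\<integral>\<^sup>+ x. (\<Prod>s\<in>S. ennreal (\<bar>h s (x s)\<bar> powr p)) \<partial>PiM S M)"
    unfolding lpI_def using p by (intro nn_integral_cong) (simp add: abs_prod prod_powr_distrib prod_ennreal)
  also have "\<dots> = (\<Prod>s\<in>S. lpI (M s) p (h s))" unfolding lpI_def
    by (rule product_nn_integral_prod[OF S]) (use h in measurable)
  finally show ?thesis using p by (simp add: lpI_epow epow_prod epow_inj)
qed

lemma lpn_const_prob:
  assumes "prob_space N" "p > 0"
  shows "lpn N p (\<lambda>_. c) = ennreal \<bar>c\<bar>"
proof -
  interpret prob_space N by fact
  have "lpI N p (\<lambda>_. c) = ennreal (\<bar>c\<bar> powr p)" unfolding lpI_def by (simp add: emeasure_space_1)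
  thus ?thesis using assms(2) by (simp add: lpn_lpI powr_powr)
qed

lemma meas_comp:
  assumes "k s \<in> J" "s \<in> S" and h: "h \<in> borel_measurable (M s)"
  shows "(\<lambda>x. h (x (k s, s))) \<in> borel_measurable (PiM (J \<times> S) (\<lambda>(i, s). M s))"
proof -
  have "(\<lambda>x. x (k s, s)) \<in> measurable (PiM (J \<times> S) (\<lambda>(i, s). M s)) ((\<lambda>(i, s). M s) (k s, s))"
    by (rule measurable_component_singleton) (use assms in auto)
  hence "(\<lambda>x. x (k s, s)) \<in> measurable (PiM (J \<times> S) (\<lambda>(i, s). M s)) (M s)" by simp
  thus ?thesis using h by (rule measurable_compose)
qed

lemma meas_F:
  fixes h :: "nat \<Rightarrow> 'a \<Rightarrow> real" and J :: "nat set"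
  assumes L: "L \<subseteq> PiE S (\<lambda>_. J)" and h: "\<And>s. s \<in> S \<Longrightarrow> h s \<in> borel_measurable (M s)"
  shows "(\<lambda>x. \<Sum>k\<in>L. \<Prod>s\<in>S. h s (x (k s, s))) \<in> borel_measurable (PiM (J \<times> S) (\<lambda>(i, s). M s))"
proof (intro borel_measurable_sum borel_measurable_prod)
  fix k s assume "k \<in> L" "s \<in> S"
  hence "k s \<in> J" using L by (auto simp: PiE_iff)
  thus "(\<lambda>x. h s (x (k s, s))) \<in> borel_measurable (PiM (J \<times> S) (\<lambda>(i, s). M s))"
    using \<open>s \<in> S\<close> h by (intro meas_comp)
qed

lemma keyR:
  fixes M :: "nat \<Rightarrow> 'a measure" and h :: "nat \<Rightarrow> 'a \<Rightarrow> real" and J :: "nat set"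
  assumes p: "p \<ge> 2" and M: "\<And>s. prob_space (M s)" and J: "finite J"
    and K: "K_R p = ennreal K" "K \<ge> 0"
    and S: "finite S" and h: "\<And>s. s \<in> S \<Longrightarrow> centered_Lp (M s) p (h s)"
    and L: "L \<subseteq> PiE S (\<lambda>_. J)"
  shows "lpn (PiM (J \<times> S) (\<lambda>(i, s). M s)) p (\<lambda>x. \<Sum>k\<in>L. \<Prod>s\<in>S. h s (x (k s, s)))
           \<le> ennreal (K ^ card S * sqrt (card L) * (\<Prod>s\<in>S. enn2real (lpn (M s) p (h s))))"
  using S h L
proof (induction S arbitrary: L rule: finite_induct)
  case empty
  have p0: "p > 0" using p by simp
  have "L \<subseteq> {\<lambda>_. undefined}" using empty.prems by simp
  hence cL: "card L \<le> 1" using card_mono[of "{\<lambda>_. undefined}" L] by auto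
  have "prob_space (PiM (J \<times> {}) (\<lambda>(i, s). M s))" by (simp add: prob_space_PiM M split: prod.splits)
  hence eq: "lpn (PiM (J \<times> {}) (\<lambda>(i, s). M s)) p (\<lambda>x. \<Sum>k\<in>L. \<Prod>s\<in>{}. h s (x (k s, s))) = ennreal (card L)"
    using lpn_const_prob[OF _ p0, of _ "real (card L)"] by simp
  have "real (card L) \<le> sqrt (card L)" using cL
    by (cases "card L") auto
  hence "ennreal (card L) \<le> ennreal (sqrt (card L))" by (rule ennreal_leI)
  thus ?case using eq by simp
next
  case (insert t S)
  let ?MM = "\<lambda>(i::nat, s::nat). M s"
  have p0: "p > 0" using p by simp
  have hc: "\<And>s. s \<in> insert t S \<Longrightarrow> centered_Lp (M s) p (h s)" using insert.prems by auto
  have hm: "\<And>s. s \<in> insert t S \<Longrightarrow> h s \<in> borel_measurable (M s)"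
    using hc by (auto simp: centered_Lp_def)
  define a where "a s = enn2real (lpn (M s) p (h s))" for s
  have la: "\<And>s. s \<in> insert t S \<Longrightarrow> lpn (M s) p (h s) = ennreal (a s)"
    using hc by (auto simp: a_def centered_Lp_def less_top[symmetric])
  have a0: "\<And>s. a s \<ge> 0" by (simp add: a_def)
  define Lt where "Lt i = {k\<in>L. k t = i}" for i
  define Li where "Li i = (\<lambda>k. restrict k S) ` Lt i" for i
  have Lsub: "L \<subseteq> PiE (insert t S) (\<lambda>_. J)" by fact
  have finL: "finite L" using Lsub by (rule finite_subset) (use J insert.hyps(1) in \<open>auto intro: finite_PiE\<close>)
  have inj: "inj_on (\<lambda>k. restrict k S) (Lt i)" for i
  proof (rule inj_onI)
    fix k k' assume kk: "k \<in> Lt i" "k' \<in> Lt i" "restrict k S = restrict k' S"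
    show "k = k'"
    proof
      fix s
      show "k s = k' s"
      proof (cases "s \<in> S")
        case True thus ?thesis using kk(3) by (metis restrict_apply')
      next
        case False
        show ?thesis
        proof (cases "s = t")
          case True thus ?thesis using kk by (auto simp: Lt_def)
        next
          case False
          with \<open>s \<notin> S\<close> have "s \<notin> insert t S" by auto
          have "k \<in> L" "k' \<in> L" using kk(1,2) by (auto simp: Lt_def)
          hence "k s = undefined" "k' s = undefined" using Lsub \<open>s \<notin> insert t S\<close>
            by (auto simp: PiE_def extensional_def)
          thus ?thesis by simp
        qed
      qed
    qed
  qed
  have cardLi: "card (Li i) = card (Lt i)" for i unfolding Li_def by (rule card_image[OF inj])
  have LiS: "Li i \<subseteq> PiE S (\<lambda>_. J)" for i using Lsub by (auto simp: Li_def Lt_def PiE_iff)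
  define G where "G i y = (\<Sum>k\<in>Li i. \<Prod>s\<in>S. h s (y (k s, s)))" for i y
  have G': "G i y = (\<Sum>k\<in>Lt i. \<Prod>s\<in>S. h s (y (k s, s)))" for i y
    unfolding G_def Li_def by (subst sum.reindex[OF inj]) (auto intro!: sum.cong prod.cong)
  have IH: "lpn (PiM (J \<times> S) ?MM) p (G i) \<le> ennreal (K ^ card S * sqrt (card (Lt i)) * (\<Prod>s\<in>S. a s))" for i
  proof -
    have eqG: "G i = (\<lambda>y. \<Sum>k\<in>Li i. \<Prod>s\<in>S. h s (y (k s, s)))" by (simp add: fun_eq_iff G_def)
    have "\<And>s. s \<in> S \<Longrightarrow> centered_Lp (M s) p (h s)" using hc by auto
    thus ?thesis using insert.IH[of "Li i"] LiS[of i] unfolding eqG by (simp add: a_def cardLi)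
  qed
  have Gm: "G i \<in> borel_measurable (PiM (J \<times> S) ?MM)" for i
    unfolding G_def by (rule meas_F[OF LiS]) (use hm in auto)
  have sumL: "(\<Sum>i\<in>J. card (Lt i)) = card L"
  proof -
    have "(\<Sum>i\<in>J. card (Lt i)) = (\<Sum>i\<in>J. \<Sum>k\<in>{k\<in>L. k t = i}. (1::nat))" by (simp add: Lt_def)
    also have "\<dots> = (\<Sum>k\<in>L. 1)" by (rule sum.group[OF finL J]) (use Lsub in \<open>auto simp: PiE_iff\<close>)
    finally show ?thesis by simp
  qed
  define F where "F x = (\<Sum>k\<in>L. \<Prod>s\<in>insert t S. h s (x (k s, s)))" for x
  have Fm: "F \<in> borel_measurable (PiM (J \<times> insert t S) ?MM)"
    unfolding F_def by (rule meas_F[OF Lsub]) (use hm in auto)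
  have JT: "J \<times> {t} = (\<lambda>i. (i, t)) ` J" by auto
  have Fmerge: "F (merge (J \<times> S) (J \<times> {t}) (y, z)) = (\<Sum>q\<in>J \<times> {t}. G (fst q) y * h t (z q))" for y z
  proof -
    have "F (merge (J \<times> S) (J \<times> {t}) (y, z)) = (\<Sum>k\<in>L. h t (z (k t, t)) * (\<Prod>s\<in>S. h s (y (k s, s))))"
      unfolding F_def
    proof (intro sum.cong refl)
      fix k assume "k \<in> L"
      hence kJ: "\<And>s. s \<in> insert t S \<Longrightarrow> k s \<in> J" using Lsub by (auto simp: PiE_iff)
      have "(\<Prod>s\<in>insert t S. h s (merge (J \<times> S) (J \<times> {t}) (y, z) (k s, s)))
          = h t (merge (J \<times> S) (J \<times> {t}) (y, z) (k t, t)) * (\<Prod>s\<in>S. h s (merge (J \<times> S) (J \<times> {t}) (y, z) (k s, s)))"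
        using insert.hyps by simp
      also have "\<dots> = h t (z (k t, t)) * (\<Prod>s\<in>S. h s (y (k s, s)))"
        using insert.hyps kJ by (auto simp: merge_def intro!: prod.cong)
      finally show "(\<Prod>s\<in>insert t S. h s (merge (J \<times> S) (J \<times> {t}) (y, z) (k s, s))) = h t (z (k t, t)) * (\<Prod>s\<in>S. h s (y (k s, s)))" .
    qed
    also have "\<dots> = (\<Sum>i\<in>J. \<Sum>k\<in>{k\<in>L. k t = i}. h t (z (k t, t)) * (\<Prod>s\<in>S. h s (y (k s, s))))"
      by (rule sum.group[OF finL J, symmetric]) (use Lsub in \<open>auto simp: PiE_iff\<close>)
    also have "\<dots> = (\<Sum>i\<in>J. G i y * h t (z (i, t)))"
      by (auto simp: G' Lt_def sum_distrib_left mult.commute intro!: sum.cong)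
    also have "\<dots> = (\<Sum>q\<in>J \<times> {t}. G (fst q) y * h t (z q))"
      by (simp only: JT, subst sum.reindex) (auto simp: inj_on_def)
    finally show ?thesis .
  qed
  have finK: "K_R p \<noteq> \<top>" using K by simp
  have inner: "(\<integral>\<^sup>+ z. ennreal (\<bar>F (merge (J \<times> S) (J \<times> {t}) (y, z))\<bar> powr p) \<partial>PiM (J \<times> {t}) ?MM)
       \<le> ennreal ((K * a t) powr p) * ennreal ((sqrt (\<Sum>i\<in>J. (G i y)\<^sup>2)) powr p)" for y
  proof -
    have PiMt: "PiM (J \<times> {t}) ?MM = PiM (J \<times> {t}) (\<lambda>_. M t)" by (rule PiM_cong) auto
    have sq: "(\<Sum>q\<in>J \<times> {t}. (G (fst q) y)\<^sup>2) = (\<Sum>i\<in>J. (G i y)\<^sup>2)"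
      by (simp only: JT, subst sum.reindex) (auto simp: inj_on_def)
    have "lpn (PiM (J \<times> {t}) (\<lambda>_. M t)) p (\<lambda>z. \<Sum>q\<in>J \<times> {t}. G (fst q) y * h t (z q))
        \<le> K_R p * (ennreal (sqrt (\<Sum>q\<in>J \<times> {t}. (G (fst q) y)\<^sup>2)) * lpn (M t) p (h t))"
      by (rule KR_apply[OF finK M hc]) (use J in auto)
    also have "\<dots> = ennreal (K * sqrt (\<Sum>i\<in>J. (G i y)\<^sup>2) * a t)"
      using K la[of t] a0[of t] by (simp add: sq ennreal_mult sum_nonneg mult.assoc)
    finally have "lpI (PiM (J \<times> {t}) (\<lambda>_. M t)) p (\<lambda>z. \<Sum>q\<in>J \<times> {t}. G (fst q) y * h t (z q))
        \<le> ennreal ((K * sqrt (\<Sum>i\<in>J. (G i y)\<^sup>2) * a t) powr p)"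
      by (subst (asm) lpn_le_iff[OF p0]) (use K a0 in \<open>auto intro!: mult_nonneg_nonneg sum_nonneg\<close>)
    also have "(K * sqrt (\<Sum>i\<in>J. (G i y)\<^sup>2) * a t) powr p = (K * a t) powr p * (sqrt (\<Sum>i\<in>J. (G i y)\<^sup>2)) powr p"
      using K a0[of t] by (simp add: powr_mult[symmetric] mult_ac)
    finally show ?thesis unfolding lpI_def PiMt[symmetric] Fmerge
      using K a0[of t] by (simp add: ennreal_mult[symmetric])
  qed
  interpret PS: product_sigma_finite ?MM
    unfolding product_sigma_finite_def using M by (auto simp: prob_space_imp_sigma_finite split: prod.splits)
  have JS: "J \<times> insert t S = (J \<times> S) \<union> (J \<times> {t})" by auto
  have disj: "(J \<times> S) \<inter> (J \<times> {t}) = {}" using insert.hyps by auto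
  have "lpI (PiM (J \<times> insert t S) ?MM) p F
      = (\<integral>\<^sup>+ y. (\<integral>\<^sup>+ z. ennreal (\<bar>F (merge (J \<times> S) (J \<times> {t}) (y, z))\<bar> powr p) \<partial>PiM (J \<times> {t}) ?MM) \<partial>PiM (J \<times> S) ?MM)"
    unfolding lpI_def JS
    by (rule PS.product_nn_integral_fold[OF disj]) (use J insert.hyps Fm JS in auto)
  also have "\<dots> \<le> (\<integral>\<^sup>+ y. ennreal ((K * a t) powr p) * ennreal ((sqrt (\<Sum>i\<in>J. (G i y)\<^sup>2)) powr p) \<partial>PiM (J \<times> S) ?MM)"
    by (intro nn_integral_mono inner)
  also have "\<dots> = ennreal ((K * a t) powr p) * lpI (PiM (J \<times> S) ?MM) p (\<lambda>y. sqrt (\<Sum>i\<in>J. (G i y)\<^sup>2))"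
    unfolding lpI_def by (subst nn_integral_cmult) (use Gm in \<open>auto simp: sum_nonneg abs_of_nonneg\<close>)
  also have "lpI (PiM (J \<times> S) ?MM) p (\<lambda>y. sqrt (\<Sum>i\<in>J. (G i y)\<^sup>2))
      \<le> ennreal ((K ^ card S * sqrt (card L) * (\<Prod>s\<in>S. a s)) powr p)"
  proof -
    have "lpn (PiM (J \<times> S) ?MM) p (\<lambda>y. sqrt (\<Sum>i\<in>J. (G i y)\<^sup>2))
        \<le> ennreal (sqrt (\<Sum>i\<in>J. (K ^ card S * sqrt (card (Lt i)) * (\<Prod>s\<in>S. a s))\<^sup>2))"
      by (rule sqrt_sum_sq[OF p J Gm _ IH]) (use K a0 in \<open>auto intro!: prod_nonneg mult_nonneg_nonneg\<close>)
    also have "(\<Sum>i\<in>J. (K ^ card S * sqrt (card (Lt i)) * (\<Prod>s\<in>S. a s))\<^sup>2)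
        = (K ^ card S * (\<Prod>s\<in>S. a s))\<^sup>2 * (\<Sum>i\<in>J. real (card (Lt i)))"
      by (simp add: sum_distrib_left sum_distrib_right power_mult_distrib mult_ac)
    also have "(\<Sum>i\<in>J. real (card (Lt i))) = real (card L)" using sumL by (simp flip: of_nat_sum)
    also have "sqrt ((K ^ card S * (\<Prod>s\<in>S. a s))\<^sup>2 * real (card L)) = K ^ card S * sqrt (card L) * (\<Prod>s\<in>S. a s)"
      using K a0 by (simp add: real_sqrt_mult prod_nonneg)
    finally show ?thesis
      by (subst (asm) lpn_le_iff[OF p0]) (use K a0 in \<open>auto intro!: mult_nonneg_nonneg prod_nonneg\<close>)
  qed
  hence "ennreal ((K * a t) powr p) * lpI (PiM (J \<times> S) ?MM) p (\<lambda>y. sqrt (\<Sum>i\<in>J. (G i y)\<^sup>2))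
      \<le> ennreal ((K * a t) powr p) * ennreal ((K ^ card S * sqrt (card L) * (\<Prod>s\<in>S. a s)) powr p)"
    by (rule mult_left_mono) simp
  also have "\<dots> = ennreal ((K ^ card (insert t S) * sqrt (card L) * (\<Prod>s\<in>insert t S. a s)) powr p)"
    using K a0 insert.hyps
    by (simp add: ennreal_mult[symmetric] powr_mult[symmetric] prod_nonneg mult_ac)
  finally have "lpI (PiM (J \<times> insert t S) ?MM) p F \<le> ennreal ((K ^ card (insert t S) * sqrt (card L) * (\<Prod>s\<in>insert t S. a s)) powr p)" .
  hence "lpn (PiM (J \<times> insert t S) ?MM) p F \<le> ennreal (K ^ card (insert t S) * sqrt (card L) * (\<Prod>s\<in>insert t S. a s))"
    by (subst lpn_le_iff[OF p0]) (use K a0 in \<open>auto intro!: mult_nonneg_nonneg prod_nonneg\<close>)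
  moreover have "F = (\<lambda>x. \<Sum>k\<in>L. \<Prod>s\<in>insert t S. h s (x (k s, s)))" by (simp add: fun_eq_iff F_def)
  ultimately show ?case by (simp add: a_def)
qed

lemma limit_bound:
  fixes x c B :: ennreal
  assumes le: "\<And>m. x \<le> c * e m + B" and e: "e \<longlonglongrightarrow> 0" and c: "c \<noteq> \<top>"
  shows "x \<le> B"
proof -
  have "(\<lambda>m. c * e m + B) \<longlonglongrightarrow> c * 0 + B"
    by (intro tendsto_add ennreal_tendsto_cmult e tendsto_const) (use c in \<open>simp add: less_top\<close>)
  hence "x \<le> c * 0 + B" by (rule LIMSEQ_le_const) (use le in auto)
  thus ?thesis by simp
qed

lemma sum_le_count_space:
  fixes f :: "'b \<Rightarrow> ennreal"
  assumes "finite A" "A \<subseteq> Z"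
  shows "(\<Sum>x\<in>A. f x) \<le> (\<integral>\<^sup>+ x. f x \<partial>count_space Z)"
proof -
  have "(\<Sum>x\<in>A. f x) = (\<integral>\<^sup>+ x. f x \<partial>count_space A)" using assms by (simp add: nn_integral_count_space_finite)
  also have "\<dots> = (\<integral>\<^sup>+ x. f x * indicator A x \<partial>count_space UNIV)"
    by (rule nn_integral_count_space_indicator) simp
  also have "\<dots> \<le> (\<integral>\<^sup>+ x. f x * indicator Z x \<partial>count_space UNIV)"
    by (intro nn_integral_mono mult_left_mono) (use assms in \<open>auto simp: indicator_def\<close>)
  also have "\<dots> = (\<integral>\<^sup>+ x. f x \<partial>count_space Z)"
    by (rule nn_integral_count_space_indicator[symmetric]) simp
  finally show ?thesis .
qed

lemma keyE:
  fixes M :: "nat \<Rightarrow> 'a measure" and h :: "nat \<Rightarrow> 'a \<Rightarrow> real" and J :: "nat set"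
  assumes p: "p \<ge> 2" and M: "\<And>s. prob_space (M s)" and J: "finite J"
    and S: "finite S" "S \<noteq> {}" and h: "\<And>s. s \<in> S \<Longrightarrow> centered_Lp (M s) p (h s)"
    and L: "L \<subseteq> PiE S (\<lambda>_. J)"
  shows "lpn (PiM (J \<times> S) (\<lambda>(i, s). M s)) p (\<lambda>x. \<Sum>k\<in>L. \<Prod>s\<in>S. h s (x (k s, s)))
           \<le> K_R p ^ card S * ennreal (sqrt (card L)) * (\<Prod>s\<in>S. lpn (M s) p (h s))"
proof (cases "K_R p = \<top>")
  case False
  define K where "K = enn2real (K_R p)"
  have K: "K_R p = ennreal K" "K \<ge> 0" using False by (auto simp: K_def less_top[symmetric])
  define a where "a s = enn2real (lpn (M s) p (h s))" for s
  have la: "\<And>s. s \<in> S \<Longrightarrow> lpn (M s) p (h s) = ennreal (a s)"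
    using h by (auto simp: a_def centered_Lp_def less_top[symmetric])
  have "lpn (PiM (J \<times> S) (\<lambda>(i, s). M s)) p (\<lambda>x. \<Sum>k\<in>L. \<Prod>s\<in>S. h s (x (k s, s)))
        \<le> ennreal (K ^ card S * sqrt (card L) * (\<Prod>s\<in>S. a s))"
    unfolding a_def by (rule keyR[OF p M J K S(1) h L])
  also have "\<dots> = K_R p ^ card S * ennreal (sqrt (card L)) * (\<Prod>s\<in>S. lpn (M s) p (h s))"
  proof -
    have "(\<Prod>s\<in>S. lpn (M s) p (h s)) = (\<Prod>s\<in>S. ennreal (a s))" using la by (intro prod.cong) auto
    also have "\<dots> = ennreal (\<Prod>s\<in>S. a s)" by (rule prod_ennreal) (simp add: a_def)
    finally have pr: "(\<Prod>s\<in>S. lpn (M s) p (h s)) = ennreal (\<Prod>s\<in>S. a s)" .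
    have pa: "(\<Prod>s\<in>S. a s) \<ge> 0" by (rule prod_nonneg) (simp add: a_def)
    show ?thesis unfolding pr K(1) using K(2) pa
      by (simp add: ennreal_power ennreal_mult)
  qed
  finally show ?thesis .
next
  case True
  have p0: "p > 0" using p by simp
  let ?MM = "\<lambda>(i::nat, s::nat). M s"
  let ?F = "\<lambda>x. \<Sum>k\<in>L. \<Prod>s\<in>S. h s (x (k s, s))"
  show ?thesis
  proof (cases "\<exists>s\<in>S. lpn (M s) p (h s) = 0")
    case True
    then obtain s0 where s0: "s0 \<in> S" "lpn (M s0) p (h s0) = 0" by blast
    have hm0: "h s0 \<in> borel_measurable (M s0)" using h s0 by (auto simp: centered_Lp_def)
    have AE0: "AE y in M s0. h s0 y = 0" by (rule lpn_zero_AE[OF p0 hm0 s0(2)])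
    have "AE x in PiM (J \<times> S) ?MM. \<forall>k\<in>L. h s0 (x (k s0, s0)) = 0"
    proof (rule AE_finite_allI)
      show "finite L" using L by (rule finite_subset) (use J S in \<open>auto intro: finite_PiE\<close>)
    next
      fix k assume "k \<in> L"
      hence kJ: "(k s0, s0) \<in> J \<times> S" using L s0 by (auto simp: PiE_iff)
      have cm: "(\<lambda>x. x (k s0, s0)) \<in> measurable (PiM (J \<times> S) ?MM) (M s0)"
        using measurable_component_singleton[OF kJ, of ?MM] by simp
      have "distr (PiM (J \<times> S) ?MM) (?MM (k s0, s0)) (\<lambda>x. x (k s0, s0)) = ?MM (k s0, s0)"
        by (rule distr_PiM_component) (use M kJ in \<open>auto split: prod.splits\<close>)
      hence d: "distr (PiM (J \<times> S) ?MM) (M s0) (\<lambda>x. x (k s0, s0)) = M s0" by simp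
      have "AE y in distr (PiM (J \<times> S) ?MM) (M s0) (\<lambda>x. x (k s0, s0)). h s0 y = 0" unfolding d by (rule AE0)
      thus "AE x in PiM (J \<times> S) ?MM. h s0 (x (k s0, s0)) = 0"
        by (subst (asm) AE_distr_iff[OF cm]) (use hm0 in auto)
    qed
    hence "AE x in PiM (J \<times> S) ?MM. ?F x = 0"
    proof eventually_elim
      case (elim x)
      show ?case
      proof (intro sum.neutral ballI)
        fix k assume "k \<in> L"
        thus "(\<Prod>s\<in>S. h s (x (k s, s))) = 0" using elim s0 S(1) by (auto intro: prod_zero)
      qed
    qed
    hence "lpn (PiM (J \<times> S) ?MM) p ?F = lpn (PiM (J \<times> S) ?MM) p (\<lambda>x. 0)" by (rule lpn_cong_AE)
    thus ?thesis using p0 by (simp add: lpn_nonneg_zero)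
  next
    case False
    show ?thesis
    proof (cases "L = {}")
      case True thus ?thesis using p0 by (simp add: lpn_nonneg_zero)
    next
      case Lne: False
      have fL: "finite L" using L by (rule finite_subset) (use J S in \<open>auto intro: finite_PiE\<close>)
      have "card L > 0" using fL Lne by (simp add: card_gt_0_iff)
      hence A: "ennreal (sqrt (card L)) \<noteq> 0" by simp
      have B: "(\<Prod>s\<in>S. lpn (M s) p (h s)) \<noteq> 0" using False S(1) by simp
      have C: "K_R p ^ card S = \<top>" using \<open>K_R p = \<top>\<close> S by (simp add: card_gt_0_iff top_power_ennreal)
      have "K_R p ^ card S * ennreal (sqrt (card L)) * (\<Prod>s\<in>S. lpn (M s) p (h s)) = \<top>"
        unfolding C by (metis A B ennreal_top_mult_right)
      thus ?thesis by simp
    qed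
  qed
qed

lemma Zpd_le_Nmax: "k \<in> Zpd d \<Longrightarrow> s \<in> {1..d} \<Longrightarrow> k s \<le> Nmax d k"
  unfolding Nmax_def by (rule Max_ge) auto

lemma Zpd_ge1: "k \<in> Zpd d \<Longrightarrow> s \<in> {1..d} \<Longrightarrow> k s \<ge> 1"
  unfolding Zpd_def by (auto simp: PiE_iff)

lemma finite_Km: "finite {k\<in>Zpd d. Nmax d k \<le> m}"
proof (rule finite_subset)
  show "{k\<in>Zpd d. Nmax d k \<le> m} \<subseteq> PiE {1..d} (\<lambda>_. {1..m})"
  proof
    fix k assume k: "k \<in> {k\<in>Zpd d. Nmax d k \<le> m}"
    hence "k \<in> Zpd d" "Nmax d k \<le> m" by auto
    thus "k \<in> PiE {1..d} (\<lambda>_. {1..m})"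
      using Zpd_le_Nmax[of k d] Zpd_ge1[of k d] unfolding Zpd_def
      by (auto simp: PiE_iff) (meson atLeastAtMost_iff le_trans)
  qed
qed (auto intro: finite_PiE)

lemma comp_meas:
  assumes "s \<in> I" "g \<in> borel_measurable (M s)"
  shows "(\<lambda>x. g (x s)) \<in> borel_measurable (PiM I M)"
  using measurable_compose[OF measurable_component_singleton[OF assms(1), of M] assms(2)] .

lemma rep_partial_meas:
  fixes g :: "nat \<Rightarrow> nat \<Rightarrow> 'a \<Rightarrow> real"
  assumes g: "\<And>s j. s \<in> {1..d} \<Longrightarrow> j \<ge> 1 \<Longrightarrow> g s j \<in> borel_measurable (M s)"
  shows "rep_partial d lam g m \<in> borel_measurable (PiM {1..d} M)"
proof -
  have "(\<lambda>x. \<Sum>k\<in>{k\<in>Zpd d. Nmax d k \<le> m}. lam k * (\<Prod>s\<in>{1..d}. g s (k s) (x s))) \<in> borel_measurable (PiM {1..d} M)"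
  proof (intro borel_measurable_sum borel_measurable_times borel_measurable_const borel_measurable_prod)
    fix k s assume "k \<in> {k\<in>Zpd d. Nmax d k \<le> m}" "s \<in> {1..d}"
    thus "(\<lambda>x. g s (k s) (x s)) \<in> borel_measurable (PiM {1..d} M)"
      using Zpd_ge1[of k d s] g by (intro comp_meas) auto
  qed
  thus ?thesis unfolding rep_partial_def[abs_def] .
qed

lemma transfer:
  fixes \<xi> :: "nat \<Rightarrow> nat \<Rightarrow> 'w \<Rightarrow> 'a"
  assumes P: "prob_space P"
    and ind: "prob_space.indep_vars P (\<lambda>(i, s). M s) (\<lambda>(i, s). \<xi> i s) ({1..} \<times> {1..d})"
    and dist: "\<forall>i\<ge>1. \<forall>s\<in>{1..d}. distr P (M s) (\<xi> i s) = M s"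
    and J: "J \<subseteq> {1..}" "J \<times> {1..d} \<noteq> {}"
    and \<Phi>: "\<Phi> \<in> borel_measurable (PiM (J \<times> {1..d}) (\<lambda>(i, s). M s))"
  shows "lpn P p (\<lambda>\<omega>. \<Phi> (\<lambda>q\<in>J \<times> {1..d}. (\<lambda>(i, s). \<xi> i s) q \<omega>)) = lpn (PiM (J \<times> {1..d}) (\<lambda>(i, s). M s)) p \<Phi>"
proof -
  interpret prob_space P by fact
  let ?I = "J \<times> {1..d}"
  let ?MM = "\<lambda>(i::nat, s::nat). M s"
  let ?X = "\<lambda>(i::nat, s::nat). \<xi> i s"
  have ind': "indep_vars ?MM ?X ?I" by (rule indep_vars_subset[OF ind]) (use J in auto)
  have rv: "\<And>q. q \<in> ?I \<Longrightarrow> random_variable (?MM q) (?X q)"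
    using ind' unfolding indep_vars_def by blast
  have D: "distr P (PiM ?I ?MM) (\<lambda>x. \<lambda>q\<in>?I. ?X q x) = PiM ?I (\<lambda>q. distr P (?MM q) (?X q))"
    by (subst indep_vars_iff_distr_eq_PiM'[symmetric]) (use J(2) rv ind' in auto)
  also have "\<dots> = PiM ?I ?MM"
    by (rule PiM_cong) (use dist J(1) in auto)
  finally have D': "distr P (PiM ?I ?MM) (\<lambda>x. \<lambda>q\<in>?I. ?X q x) = PiM ?I ?MM" .
  have Xm: "(\<lambda>x. \<lambda>q\<in>?I. ?X q x) \<in> measurable P (PiM ?I ?MM)"
    by (rule measurable_restrict) (use rv in auto)
  have "lpn (PiM ?I ?MM) p \<Phi> = lpn (distr P (PiM ?I ?MM) (\<lambda>x. \<lambda>q\<in>?I. ?X q x)) p \<Phi>" using D' by simp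
  also have "\<dots> = lpn P p (\<lambda>\<omega>. \<Phi> (\<lambda>q\<in>?I. ?X q \<omega>))" by (rule lpn_distr[OF Xm \<Phi>])
  finally show ?thesis by simp
qed

lemma proj_meas:
  assumes l: "l \<in> {1..d} \<rightarrow> J"
  shows "(\<lambda>y. \<lambda>s\<in>{1..d}. y (l s, s)) \<in> measurable (PiM (J \<times> {1..d}) (\<lambda>(i, s). M s)) (PiM {1..d} M)"
proof (rule measurable_restrict)
  fix s assume s: "s \<in> {1..d}"
  hence "(l s, s) \<in> J \<times> {1..d}" using l by auto
  from measurable_component_singleton[OF this, of "\<lambda>(i, s). M s"]
  show "(\<lambda>y. y (l s, s)) \<in> measurable (PiM (J \<times> {1..d}) (\<lambda>(i, s). M s)) (M s)" by simp
qed

lemma proj: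
  assumes M: "\<And>s. s \<in> {1..d} \<Longrightarrow> prob_space (M s)" and l: "l \<in> {1..d} \<rightarrow> J"
    and D: "D \<in> borel_measurable (PiM {1..d} M)"
  shows "lpn (PiM (J \<times> {1..d}) (\<lambda>(i, s). M s)) p (\<lambda>y. D (\<lambda>s\<in>{1..d}. y (l s, s))) = lpn (PiM {1..d} M) p D"
proof -
  have inj: "inj_on (\<lambda>s. (l s, s)) {1..d}" by (auto simp: inj_on_def)
  have "distr (PiM (J \<times> {1..d}) (\<lambda>(i, s). M s)) (PiM {1..d} (\<lambda>s. (\<lambda>(i, s). M s) (l s, s))) (\<lambda>\<omega>. \<lambda>n\<in>{1..d}. \<omega> (l n, n))
      = PiM {1..d} (\<lambda>s. (\<lambda>(i, s). M s) (l s, s))"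
    by (rule distr_PiM_reindex) (use M l inj in auto)
  hence d: "distr (PiM (J \<times> {1..d}) (\<lambda>(i, s). M s)) (PiM {1..d} M) (\<lambda>\<omega>. \<lambda>n\<in>{1..d}. \<omega> (l n, n)) = PiM {1..d} M"
    by simp
  have "lpn (PiM {1..d} M) p D = lpn (distr (PiM (J \<times> {1..d}) (\<lambda>(i, s). M s)) (PiM {1..d} M) (\<lambda>\<omega>. \<lambda>n\<in>{1..d}. \<omega> (l n, n))) p D"
    using d by simp
  also have "\<dots> = lpn (PiM (J \<times> {1..d}) (\<lambda>(i, s). M s)) p (\<lambda>y. D (\<lambda>s\<in>{1..d}. y (l s, s)))"
    by (rule lpn_distr[OF proj_meas[OF l] D])
  finally show ?thesis by simp
qed

lemma PhiB:
  assumes p: "p \<ge> 1" and M: "\<And>s. s \<in> {1..d} \<Longrightarrow> prob_space (M s)"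
    and L: "finite L" "L \<noteq> {}" and lJ: "\<And>l. l \<in> L \<Longrightarrow> l \<in> {1..d} \<rightarrow> J"
    and D: "D \<in> borel_measurable (PiM {1..d} M)"
  shows "lpn (PiM (J \<times> {1..d}) (\<lambda>(i, s). M s)) p (\<lambda>y. (\<Sum>l\<in>L. D (\<lambda>s\<in>{1..d}. y (l s, s))) / sqrt (card L))
         \<le> ennreal (sqrt (card L)) * lpn (PiM {1..d} M) p D"
proof -
  let ?\<Omega> = "PiM (J \<times> {1..d}) (\<lambda>(i, s). M s)"
  define c where "c = sqrt (card L)"
  have c: "c > 0" using L by (simp add: c_def card_gt_0_iff)
  have Am: "(\<lambda>y. D (\<lambda>s\<in>{1..d}. y (l s, s))) \<in> borel_measurable ?\<Omega>" if "l \<in> L" for l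
    using measurable_compose[OF proj_meas[OF lJ[OF that]] D] .
  have "lpn ?\<Omega> p (\<lambda>y. (\<Sum>l\<in>L. D (\<lambda>s\<in>{1..d}. y (l s, s))) / c)
      = lpn ?\<Omega> p (\<lambda>y. (1/c) * (\<Sum>l\<in>L. D (\<lambda>s\<in>{1..d}. y (l s, s))))" by simp
  also have "\<dots> = ennreal (1/c) * lpn ?\<Omega> p (\<lambda>y. \<Sum>l\<in>L. D (\<lambda>s\<in>{1..d}. y (l s, s)))"
    using c p by (subst lpn_scale) (auto intro!: borel_measurable_sum Am)
  also have "\<dots> \<le> ennreal (1/c) * (\<Sum>l\<in>L. lpn ?\<Omega> p (\<lambda>y. D (\<lambda>s\<in>{1..d}. y (l s, s))))"
    by (intro mult_left_mono minkowski_sum[OF p L(1)] Am) auto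
  also have "(\<Sum>l\<in>L. lpn ?\<Omega> p (\<lambda>y. D (\<lambda>s\<in>{1..d}. y (l s, s)))) = (\<Sum>l\<in>L. lpn (PiM {1..d} M) p D)"
    by (intro sum.cong refl proj[OF M lJ D]) auto
  also have "\<dots> = of_nat (card L) * lpn (PiM {1..d} M) p D" by simp
  also have "ennreal (1/c) * (of_nat (card L) * lpn (PiM {1..d} M) p D) = ennreal (card L / c) * lpn (PiM {1..d} M) p D"
  proof -
    have "ennreal (1/c) * ennreal (real (card L)) = ennreal (real (card L) / c)"
      using c by (simp add: ennreal_mult[symmetric])
    thus ?thesis by (simp add: mult.assoc[symmetric] ennreal_of_nat_eq_real_of_nat)
  qed
  also have "real (card L) / c = c" unfolding c_def by (rule real_div_sqrt) simp
  finally show ?thesis by (simp only: c_def)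
qed

lemma PhiR:
  fixes g :: "nat \<Rightarrow> nat \<Rightarrow> 'a \<Rightarrow> real" and J :: "nat set"
  assumes p: "p \<ge> 2" and d: "d \<ge> 1" and M: "\<And>s. s \<in> {1..d} \<Longrightarrow> prob_space (M s)"
    and J: "finite J" and L: "L \<subseteq> PiE {1..d} (\<lambda>_. J)" "L \<noteq> {}"
    and g: "\<And>s j. s \<in> {1..d} \<Longrightarrow> j \<ge> 1 \<Longrightarrow> centered_Lp (M s) p (g s j)"
  shows "lpn (PiM (J \<times> {1..d}) (\<lambda>(i, s). M s)) p (\<lambda>y. (\<Sum>l\<in>L. rep_partial d lam g m (\<lambda>s\<in>{1..d}. y (l s, s))) / sqrt (card L))
         \<le> K_R p ^ d * rep_cost d M p lam g"
proof -
  let ?\<Omega> = "PiM (J \<times> {1..d}) (\<lambda>(i, s). M s)"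
  define Km where "Km = {k\<in>Zpd d. Nmax d k \<le> m}"
  have fKm: "finite Km" unfolding Km_def by (rule finite_Km)
  have fL: "finite L" using L(1) by (rule finite_subset) (use J in \<open>auto intro: finite_PiE\<close>)
  define c where "c = sqrt (card L)"
  have c: "c > 0" using fL L(2) by (simp add: c_def card_gt_0_iff)
  define T where "T k y = (\<Sum>l\<in>L. \<Prod>s\<in>{1..d}. g s (k s) (y (l s, s)))" for k y
  have gm: "\<And>s j. s \<in> {1..d} \<Longrightarrow> j \<ge> 1 \<Longrightarrow> g s j \<in> borel_measurable (M s)"
    using g by (auto simp: centered_Lp_def)
  have Tm: "T k \<in> borel_measurable ?\<Omega>" if "k \<in> Km" for k
  proof -
    have "(\<lambda>y. \<Sum>l\<in>L. \<Prod>s\<in>{1..d}. g s (k s) (y (l s, s))) \<in> borel_measurable ?\<Omega>"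
      by (rule meas_F[OF L(1)]) (use that gm Zpd_ge1 in \<open>auto simp: Km_def\<close>)
    thus ?thesis by (simp add: T_def[abs_def])
  qed
  have A: "(\<Sum>l\<in>L. rep_partial d lam g m (\<lambda>s\<in>{1..d}. y (l s, s))) = (\<Sum>k\<in>Km. lam k * T k y)" for y
  proof -
    have "(\<Sum>l\<in>L. rep_partial d lam g m (\<lambda>s\<in>{1..d}. y (l s, s)))
        = (\<Sum>l\<in>L. \<Sum>k\<in>Km. lam k * (\<Prod>s\<in>{1..d}. g s (k s) (y (l s, s))))"
      unfolding rep_partial_def Km_def by (intro sum.cong refl arg_cong2[where f="(*)"] prod.cong) auto
    also have "\<dots> = (\<Sum>k\<in>Km. \<Sum>l\<in>L. lam k * (\<Prod>s\<in>{1..d}. g s (k s) (y (l s, s))))" by (rule sum.swap)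
    also have "\<dots> = (\<Sum>k\<in>Km. lam k * T k y)" by (simp add: T_def sum_distrib_left)
    finally show ?thesis .
  qed
  define M' where "M' s = (if s \<in> {1..d} then M s else M 1)" for s
  have M': "\<And>s. prob_space (M' s)" using M d by (auto simp: M'_def)
  have PiM': "PiM (J \<times> {1..d}) (\<lambda>(i, s). M' s) = ?\<Omega>" by (rule PiM_cong) (auto simp: M'_def)
  define Pk where "Pk k = (\<Prod>s\<in>{1..d}. lpn (M s) p (g s (k s)))" for k
  have Tk: "lpn ?\<Omega> p (T k) \<le> K_R p ^ d * ennreal c * Pk k" if k: "k \<in> Km" for k
  proof -
    have "lpn (PiM (J \<times> {1..d}) (\<lambda>(i, s). M' s)) p (\<lambda>x. \<Sum>l\<in>L. \<Prod>s\<in>{1..d}. g s (k s) (x (l s, s)))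
        \<le> K_R p ^ card {1..d} * ennreal (sqrt (card L)) * (\<Prod>s\<in>{1..d}. lpn (M' s) p (g s (k s)))"
      by (rule keyE[OF p M' J _ _ _ L(1)]) (use d k g Zpd_ge1 in \<open>auto simp: M'_def Km_def\<close>)
    moreover have "(\<Prod>s\<in>{1..d}. lpn (M' s) p (g s (k s))) = Pk k" unfolding Pk_def
      by (intro prod.cong) (auto simp: M'_def)
    ultimately show ?thesis unfolding PiM' by (simp add: T_def[abs_def] c_def)
  qed
  have p0: "p > 0" using p by simp
  have "(\<Sum>k\<in>Km. lpn ?\<Omega> p (\<lambda>y. lam k * T k y)) = (\<Sum>k\<in>Km. ennreal \<bar>lam k\<bar> * lpn ?\<Omega> p (T k))"
    using p0 by (intro sum.cong refl lpn_scale Tm) auto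
  also have "\<dots> \<le> (\<Sum>k\<in>Km. ennreal \<bar>lam k\<bar> * (K_R p ^ d * ennreal c * Pk k))"
    by (intro sum_mono mult_left_mono Tk) auto
  also have "\<dots> = ennreal c * (K_R p ^ d * (\<Sum>k\<in>Km. ennreal \<bar>lam k\<bar> * Pk k))"
    by (simp add: sum_distrib_left mult_ac)
  finally have inner: "(\<Sum>k\<in>Km. lpn ?\<Omega> p (\<lambda>y. lam k * T k y)) \<le> ennreal c * (K_R p ^ d * (\<Sum>k\<in>Km. ennreal \<bar>lam k\<bar> * Pk k))" .
  have "lpn ?\<Omega> p (\<lambda>y. (\<Sum>l\<in>L. rep_partial d lam g m (\<lambda>s\<in>{1..d}. y (l s, s))) / sqrt (card L))
      = lpn ?\<Omega> p (\<lambda>y. (1/c) * (\<Sum>k\<in>Km. lam k * T k y))" unfolding A by (simp add: c_def)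
  also have "\<dots> = ennreal (1/c) * lpn ?\<Omega> p (\<lambda>y. \<Sum>k\<in>Km. lam k * T k y)"
  proof -
    have "(\<lambda>y. \<Sum>k\<in>Km. lam k * T k y) \<in> borel_measurable ?\<Omega>"
      by (intro borel_measurable_sum borel_measurable_times borel_measurable_const Tm)
    from lpn_scale[OF p0 this, of "1/c"] c show ?thesis by simp
  qed
  also have "\<dots> \<le> ennreal (1/c) * (\<Sum>k\<in>Km. lpn ?\<Omega> p (\<lambda>y. lam k * T k y))"
    using p by (intro mult_left_mono minkowski_sum fKm borel_measurable_times borel_measurable_const Tm) auto
  also have "\<dots> \<le> ennreal (1/c) * (ennreal c * (K_R p ^ d * (\<Sum>k\<in>Km. ennreal \<bar>lam k\<bar> * Pk k)))"
    by (rule mult_left_mono[OF inner]) simp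
  also have "ennreal (1/c) * (ennreal c * (K_R p ^ d * (\<Sum>k\<in>Km. ennreal \<bar>lam k\<bar> * Pk k)))
      = K_R p ^ d * (\<Sum>k\<in>Km. ennreal \<bar>lam k\<bar> * Pk k)"
    using c by (simp add: mult.assoc[symmetric] ennreal_mult[symmetric])
  also have "\<dots> \<le> K_R p ^ d * rep_cost d M p lam g"
    unfolding rep_cost_def Pk_def
    by (intro mult_left_mono sum_le_count_space fKm) (auto simp: Km_def)
  finally show ?thesis .
qed

lemma f_cost:
  fixes g :: "nat \<Rightarrow> nat \<Rightarrow> 'a \<Rightarrow> real"
  assumes p: "p \<ge> 1" and d: "d \<ge> 1" and M: "\<And>s. s \<in> {1..d} \<Longrightarrow> prob_space (M s)"
    and fm: "f \<in> borel_measurable (PiM {1..d} M)"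
    and rep: "degrep d M p Mdeg f lam g"
  shows "lpn (PiM {1..d} M) p f \<le> rep_cost d M p lam g"
proof -
  have p0: "p > 0" using p by simp
  have g: "\<And>s j. s \<in> {1..d} \<Longrightarrow> j \<ge> 1 \<Longrightarrow> centered_Lp (M s) p (g s j)"
    and conv: "(\<lambda>m. lpn (PiM {1..d} M) p (\<lambda>x. f x - rep_partial d lam g m x)) \<longlonglongrightarrow> 0"
    using rep by (auto simp: degrep_def)
  have gm: "\<And>s j. s \<in> {1..d} \<Longrightarrow> j \<ge> 1 \<Longrightarrow> g s j \<in> borel_measurable (M s)"
    using g by (auto simp: centered_Lp_def)
  define M' where "M' s = (if s \<in> {1..d} then M s else M 1)" for s
  have M': "\<And>s. prob_space (M' s)" using M d by (auto simp: M'_def)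
  have PiM': "PiM {1..d} M' = PiM {1..d} M" by (rule PiM_cong) (auto simp: M'_def)
  have Rb: "lpn (PiM {1..d} M) p (rep_partial d lam g m) \<le> rep_cost d M p lam g" for m
  proof -
    define Km where "Km = {k\<in>Zpd d. Nmax d k \<le> m}"
    have fKm: "finite Km" unfolding Km_def by (rule finite_Km)
    have Pm: "(\<lambda>x. \<Prod>s\<in>{1..d}. g s (k s) (x s)) \<in> borel_measurable (PiM {1..d} M)" if "k \<in> Km" for k
      by (intro borel_measurable_prod comp_meas) (use that gm Zpd_ge1 in \<open>auto simp: Km_def\<close>)
    have "lpn (PiM {1..d} M) p (rep_partial d lam g m)
        = lpn (PiM {1..d} M) p (\<lambda>x. \<Sum>k\<in>Km. lam k * (\<Prod>s\<in>{1..d}. g s (k s) (x s)))"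
      unfolding rep_partial_def[abs_def] Km_def ..
    also have "\<dots> \<le> (\<Sum>k\<in>Km. lpn (PiM {1..d} M) p (\<lambda>x. lam k * (\<Prod>s\<in>{1..d}. g s (k s) (x s))))"
      by (intro minkowski_sum[OF p fKm] borel_measurable_times Pm) auto
    also have "\<dots> = (\<Sum>k\<in>Km. ennreal \<bar>lam k\<bar> * (\<Prod>s\<in>{1..d}. lpn (M s) p (g s (k s))))"
    proof (intro sum.cong refl)
      fix k assume k: "k \<in> Km"
      have "lpn (PiM {1..d} M') p (\<lambda>x. \<Prod>s\<in>{1..d}. g s (k s) (x s)) = (\<Prod>s\<in>{1..d}. lpn (M' s) p (g s (k s)))"
        by (rule lpn_prod[OF p0 _ M']) (use k gm Zpd_ge1 in \<open>auto simp: Km_def M'_def\<close>)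
      moreover have "(\<Prod>s\<in>{1..d}. lpn (M' s) p (g s (k s))) = (\<Prod>s\<in>{1..d}. lpn (M s) p (g s (k s)))"
        by (intro prod.cong) (auto simp: M'_def)
      ultimately have "lpn (PiM {1..d} M) p (\<lambda>x. \<Prod>s\<in>{1..d}. g s (k s) (x s)) = (\<Prod>s\<in>{1..d}. lpn (M s) p (g s (k s)))"
        unfolding PiM' by simp
      thus "lpn (PiM {1..d} M) p (\<lambda>x. lam k * (\<Prod>s\<in>{1..d}. g s (k s) (x s)))
          = ennreal \<bar>lam k\<bar> * (\<Prod>s\<in>{1..d}. lpn (M s) p (g s (k s)))"
        by (simp only: lpn_scale[OF p0 Pm[OF k]])
    qed
    also have "\<dots> \<le> rep_cost d M p lam g"
      unfolding rep_cost_def by (rule sum_le_count_space[OF fKm]) (auto simp: Km_def)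
    finally show ?thesis .
  qed
  show ?thesis
  proof (rule limit_bound[OF _ conv, of _ 1])
    fix m
    have Rm: "rep_partial d lam g m \<in> borel_measurable (PiM {1..d} M)"
      by (rule rep_partial_meas) (use gm in auto)
    have "lpn (PiM {1..d} M) p f = lpn (PiM {1..d} M) p (\<lambda>x. (f x - rep_partial d lam g m x) + rep_partial d lam g m x)"
      by simp
    also have "\<dots> \<le> lpn (PiM {1..d} M) p (\<lambda>x. f x - rep_partial d lam g m x) + lpn (PiM {1..d} M) p (rep_partial d lam g m)"
      by (rule minkowski[OF p]) (use fm Rm in auto)
    also have "\<dots> \<le> 1 * lpn (PiM {1..d} M) p (\<lambda>x. f x - rep_partial d lam g m x) + rep_cost d M p lam g"
      using Rb[of m] by (simp add: add_left_mono)
    finally show "lpn (PiM {1..d} M) p f \<le> 1 * lpn (PiM {1..d} M) p (\<lambda>x. f x - rep_partial d lam g m x) + rep_cost d M p lam g" .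
  qed simp
qed

theorem mainTheorem7:
  fixes d :: nat and p :: real and M :: "nat \<Rightarrow> 'a measure" and P :: "'w measure"
    and \<xi> :: "nat \<Rightarrow> nat \<Rightarrow> 'w \<Rightarrow> 'a" and f :: "(nat \<Rightarrow> 'a) \<Rightarrow> real"
  assumes "d \<ge> 1" and "p \<ge> 2"
    and "prob_space P"
    and "\<forall>s\<in>{1..d}. prob_space (M s)"
    and "prob_space.indep_vars P (\<lambda>(i, s). M s) (\<lambda>(i, s). \<xi> i s) ({1..} \<times> {1..d})"
    and "\<forall>i\<ge>1. \<forall>s\<in>{1..d}. distr P (M s) (\<xi> i s) = M s"
    and "f \<in> borel_measurable (PiM {1..d} M)"
    and "integrable P (\<lambda>\<omega>. f (\<lambda>s\<in>{1..d}. \<xi> 1 s \<omega>))"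
    and "(\<integral>\<omega>. f (\<lambda>s\<in>{1..d}. \<xi> 1 s \<omega>) \<partial>P) = 0"
    and "Dnorm d M p f < \<infinity>"
  shows "(SUP L\<in>{L. L \<subseteq> Zpd d \<and> finite L \<and> L \<noteq> {}}. lpn P p (S_L d \<xi> f L))
           \<le> K_R p ^ d * Dnorm d M p f
         \<and> (\<forall>Mdeg lam g. degrep d M p Mdeg f lam g \<longrightarrow>
           (SUP L\<in>{L. L \<subseteq> Zpd d \<and> finite L \<and> L \<noteq> {}}. lpn P p (S_L d \<xi> f L))
             \<le> K_R p ^ d * rep_cost d M p lam g)"
proof -
  note d = assms(1) and p = assms(2) and P = assms(3) and ind = assms(5) and dist = assms(6)
    and fm = assms(7) and Dfin = assms(10)
  have M: "\<And>s. s \<in> {1..d} \<Longrightarrow> prob_space (M s)" using assms(4) by auto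
  have p1: "p \<ge> 1" using p by simp
  let ?LL = "{L. L \<subseteq> Zpd d \<and> finite L \<and> L \<noteq> {}}"
  have perL: "lpn P p (S_L d \<xi> f L) \<le> ennreal (sqrt (card L)) * lpn (PiM {1..d} M) p f
      \<and> (\<forall>Mdeg lam g. degrep d M p Mdeg f lam g \<longrightarrow> lpn P p (S_L d \<xi> f L) \<le> K_R p ^ d * rep_cost d M p lam g)"
    if L: "L \<subseteq> Zpd d" "finite L" "L \<noteq> {}" for L
  proof -
    define J where "J = (\<Union>l\<in>L. l ` {1..d})"
    have fJ: "finite J" using L(2) by (simp add: J_def)
    have J1: "J \<subseteq> {1..}" using L(1) by (auto simp: J_def Zpd_def PiE_iff)
    have Jne: "J \<times> {1..d} \<noteq> {}" using L(3) d by (auto simp: J_def)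
    have lJ: "\<And>l. l \<in> L \<Longrightarrow> l \<in> {1..d} \<rightarrow> J" by (auto simp: J_def)
    have LPi: "L \<subseteq> PiE {1..d} (\<lambda>_. J)" using L(1) by (auto simp: J_def Zpd_def PiE_iff)
    let ?\<Omega> = "PiM (J \<times> {1..d}) (\<lambda>(i, s). M s)"
    let ?X = "\<lambda>\<omega>. \<lambda>q\<in>J \<times> {1..d}. (\<lambda>(i, s). \<xi> i s) q \<omega>"
    define \<Phi> where "\<Phi> (D :: (nat \<Rightarrow> 'a) \<Rightarrow> real) (y :: nat \<times> nat \<Rightarrow> 'a) = (\<Sum>l\<in>L. D (\<lambda>s\<in>{1..d}. y (l s, s))) / sqrt (card L)" for D y
    have \<Phi>m: "\<Phi> D \<in> borel_measurable ?\<Omega>" if D: "D \<in> borel_measurable (PiM {1..d} M)" for D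
    proof -
      have "(\<lambda>y. (\<Sum>l\<in>L. D (\<lambda>s\<in>{1..d}. y (l s, s))) / sqrt (card L)) \<in> borel_measurable ?\<Omega>"
        by (intro borel_measurable_divide borel_measurable_const borel_measurable_sum
            measurable_compose[OF proj_meas D] lJ)
      thus ?thesis by (simp add: \<Phi>_def[abs_def])
    qed
    have SL: "S_L d \<xi> f L = (\<lambda>\<omega>. \<Phi> f (?X \<omega>))"
    proof
      fix \<omega>
      have "(\<Sum>k\<in>L. f (\<lambda>s\<in>{1..d}. \<xi> (k s) s \<omega>)) = (\<Sum>l\<in>L. f (\<lambda>s\<in>{1..d}. ?X \<omega> (l s, s)))"
      proof (intro sum.cong refl arg_cong[where f=f] restrict_ext)
        fix l s assume ls: "l \<in> L" "s \<in> {1..d}"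
        hence "l s \<in> J" using lJ[OF ls(1)] by blast
        thus "\<xi> (l s) s \<omega> = ?X \<omega> (l s, s)" using ls(2) by simp
      qed
      thus "S_L d \<xi> f L \<omega> = \<Phi> f (?X \<omega>)" by (simp add: S_L_def \<Phi>_def)
    qed
    have tr: "lpn P p (S_L d \<xi> f L) = lpn ?\<Omega> p (\<Phi> f)"
      unfolding SL by (rule transfer[OF P ind dist J1 Jne \<Phi>m[OF fm]])
    have B1: "lpn ?\<Omega> p (\<Phi> D) \<le> ennreal (sqrt (card L)) * lpn (PiM {1..d} M) p D"
      if D: "D \<in> borel_measurable (PiM {1..d} M)" for D
      unfolding \<Phi>_def[abs_def] by (rule PhiB[OF p1 M L(2,3) lJ D])
    show ?thesis
    proof
      show "lpn P p (S_L d \<xi> f L) \<le> ennreal (sqrt (card L)) * lpn (PiM {1..d} M) p f"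
        unfolding tr by (rule B1[OF fm])
    next
      show "\<forall>Mdeg lam g. degrep d M p Mdeg f lam g \<longrightarrow> lpn P p (S_L d \<xi> f L) \<le> K_R p ^ d * rep_cost d M p lam g"
      proof (intro allI impI)
        fix Mdeg lam and g :: "nat \<Rightarrow> nat \<Rightarrow> 'a \<Rightarrow> real"
        assume rep: "degrep d M p Mdeg f lam g"
        have g: "\<And>s j. s \<in> {1..d} \<Longrightarrow> j \<ge> 1 \<Longrightarrow> centered_Lp (M s) p (g s j)"
          and conv: "(\<lambda>m. lpn (PiM {1..d} M) p (\<lambda>x. f x - rep_partial d lam g m x)) \<longlonglongrightarrow> 0"
          using rep by (auto simp: degrep_def)
        have gm: "\<And>s j. s \<in> {1..d} \<Longrightarrow> j \<ge> 1 \<Longrightarrow> g s j \<in> borel_measurable (M s)"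
          using g by (auto simp: centered_Lp_def)
        show "lpn P p (S_L d \<xi> f L) \<le> K_R p ^ d * rep_cost d M p lam g"
          unfolding tr
        proof (rule limit_bound[OF _ conv, of _ "ennreal (sqrt (card L))"])
          fix m
          let ?R = "rep_partial d lam g m"
          have Rm: "?R \<in> borel_measurable (PiM {1..d} M)"
            by (rule rep_partial_meas) (use gm in auto)
          have fRm: "(\<lambda>x. f x - ?R x) \<in> borel_measurable (PiM {1..d} M)" using fm Rm by measurable
          have eq: "\<Phi> f = (\<lambda>y. \<Phi> (\<lambda>x. f x - ?R x) y + \<Phi> ?R y)"
            by (simp add: fun_eq_iff \<Phi>_def sum_subtractf add_divide_distrib[symmetric])
          have "lpn ?\<Omega> p (\<Phi> f) \<le> lpn ?\<Omega> p (\<Phi> (\<lambda>x. f x - ?R x)) + lpn ?\<Omega> p (\<Phi> ?R)"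
            unfolding eq by (rule minkowski[OF p1 \<Phi>m[OF fRm] \<Phi>m[OF Rm]])
          also have "\<dots> \<le> ennreal (sqrt (card L)) * lpn (PiM {1..d} M) p (\<lambda>x. f x - ?R x) + K_R p ^ d * rep_cost d M p lam g"
          proof (rule add_mono)
            show "lpn ?\<Omega> p (\<Phi> (\<lambda>x. f x - ?R x)) \<le> ennreal (sqrt (card L)) * lpn (PiM {1..d} M) p (\<lambda>x. f x - ?R x)"
              by (rule B1[OF fRm])
            show "lpn ?\<Omega> p (\<Phi> ?R) \<le> K_R p ^ d * rep_cost d M p lam g"
              unfolding \<Phi>_def[abs_def] by (rule PhiR[OF p d M fJ LPi L(3) g])
          qed
          finally show "lpn ?\<Omega> p (\<Phi> f) \<le> ennreal (sqrt (card L)) * lpn (PiM {1..d} M) p (\<lambda>x. f x - ?R x) + K_R p ^ d * rep_cost d M p lam g" .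
        qed simp
      qed
    qed
  qed
  have C2: "\<forall>Mdeg lam g. degrep d M p Mdeg f lam g \<longrightarrow>
           (SUP L\<in>?LL. lpn P p (S_L d \<xi> f L)) \<le> K_R p ^ d * rep_cost d M p lam g"
  proof (intro allI impI)
    fix Mdeg lam g assume rep: "degrep d M p Mdeg f lam g"
    show "(SUP L\<in>?LL. lpn P p (S_L d \<xi> f L)) \<le> K_R p ^ d * rep_cost d M p lam g"
      by (rule SUP_least) (use perL rep in blast)
  qed
  define C where "C = {rep_cost d M p lam g | lam g Mdeg. degrep d M p Mdeg f lam g}"
  have DC: "Dnorm d M p f = Inf C" unfolding Dnorm_def C_def ..
  have Cne: "C \<noteq> {}" using Dfin DC by auto
  have C1: "(SUP L\<in>?LL. lpn P p (S_L d \<xi> f L)) \<le> K_R p ^ d * Dnorm d M p f"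
  proof (cases "K_R p = \<top>")
    case False
    have "(SUP L\<in>?LL. lpn P p (S_L d \<xi> f L)) \<le> Inf C * K_R p ^ d"
    proof (rule le_Inf_mult[OF Cne])
      show "K_R p ^ d \<noteq> \<top>" using False by (simp add: power_eq_top_ennreal)
    next
      fix K assume "K \<in> C"
      then obtain lam g Mdeg where "K = rep_cost d M p lam g" "degrep d M p Mdeg f lam g"
        unfolding C_def by blast
      thus "(SUP L\<in>?LL. lpn P p (S_L d \<xi> f L)) \<le> K * K_R p ^ d" using C2 by (simp add: mult.commute)
    qed
    thus ?thesis using DC by (simp add: mult.commute)
  next
    case True
    show ?thesis
    proof (cases "Dnorm d M p f = 0")
      case False
      have "K_R p ^ d = \<top>" using True d by (simp add: top_power_ennreal)
      hence "K_R p ^ d * Dnorm d M p f = \<top>" using False by simp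
      thus ?thesis by simp
    next
      case D0: True
      have f0: "lpn (PiM {1..d} M) p f = 0"
      proof -
        have "lpn (PiM {1..d} M) p f \<le> Inf C"
        proof (rule Inf_greatest)
          fix K assume "K \<in> C"
          then obtain lam g Mdeg where "K = rep_cost d M p lam g" "degrep d M p Mdeg f lam g"
            unfolding C_def by blast
          thus "lpn (PiM {1..d} M) p f \<le> K" using f_cost[OF p1 d M fm] by blast
        qed
        thus ?thesis using D0 DC by simp
      qed
      have "(SUP L\<in>?LL. lpn P p (S_L d \<xi> f L)) \<le> 0"
      proof (rule SUP_least)
        fix L assume "L \<in> ?LL"
        thus "lpn P p (S_L d \<xi> f L) \<le> 0" using perL[of L] f0 by auto
      qed
      thus ?thesis by simp
    qed
  qed
  show ?thesis using C1 C2 by blast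
qed

end
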